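(* Let $R$ be a left (respectively right) Noetherian domain and let $A$ be a bijective skew PBW extension of $R$. Then $A$ is a left (respectively right) Ore domain; hence the left (respectively right) division ring of fractions of $A$ exists.
   Context: Rings are associative with identity. Skew PBW extension. Let $R$ and $A$ be rings. $A$ is a skew PBW extension of $R$, written $A=\sigma(R)\langle x_1,\dots,x_n\rangle$, if the following hold. (i) $R\subseteq A$. (ii) There are $x_1,\dots,x_n\in A$ such that $A$ is a free left $R$-module with basis $\{x_1^{\alpha_1}\cdots x_n^{\alpha_n}:\alpha\in\mathbb N^n\}$. (iii) For each $i$ and each $r\in R\setminus\{0\}$ there is $c_{i,r}\in R\setminus\{0\}$ with $x_ir-c_{i,r}x_i\in R$. (iv) For all $i,j$ there is $c_{i,j}\in R\setminus\{0\}$ with $x_jx_i-c_{i,j}x_ix_j\in R+Rx_1+\dots+Rx_n$. There are injective endomorphisms $\sigma_i$ of $R$ and $\sigma_i$-derivations $\delta_i$ with $x_ir=\sigma_i(r)x_i+\delta_i(r)$ for all $r\in R$. $A$ is bijective if all $\sigma_i$ are bijective and all $c_{i,j}$ ($i<j$) are invertible. A domain $D$ is a left Ore domain if for all $a,b\in D$ with $b\neq 0$ there exist $p\neq 0$ and $q$ in $D$ with $pa=qb$. Right Ore domains are defined symmetrically. *)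

theory Defs
  imports Main
begin

text \<open>The ambient ring A is the whole type 'a (class ring_1); R is a subset of it.
  The generators x_1,...,x_n are x 0, ..., x (n-1).\<close>

definition subring_of :: "'a::ring_1 set \<Rightarrow> bool" where
  "subring_of R \<longleftrightarrow> 0 \<in> R \<and> 1 \<in> R \<and> (\<forall>a\<in>R. \<forall>b\<in>R. a + b \<in> R \<and> a - b \<in> R \<and> a * b \<in> R)"

definition domain_on :: "'a::ring_1 set \<Rightarrow> bool" where
  "domain_on D \<longleftrightarrow> (1::'a) \<noteq> 0 \<and> (\<forall>a\<in>D. \<forall>b\<in>D. a * b = 0 \<longrightarrow> a = 0 \<or> b = 0)"

definition left_ideal_of :: "'a::ring_1 set \<Rightarrow> 'a set \<Rightarrow> bool" where
  "left_ideal_of R I \<longleftrightarrow> I \<subseteq> R \<and> 0 \<in> I \<and> (\<forall>a\<in>I. \<forall>b\<in>I. a + b \<in> I)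
     \<and> (\<forall>r\<in>R. \<forall>a\<in>I. r * a \<in> I)"

definition right_ideal_of :: "'a::ring_1 set \<Rightarrow> 'a set \<Rightarrow> bool" where
  "right_ideal_of R I \<longleftrightarrow> I \<subseteq> R \<and> 0 \<in> I \<and> (\<forall>a\<in>I. \<forall>b\<in>I. a + b \<in> I)
     \<and> (\<forall>r\<in>R. \<forall>a\<in>I. a * r \<in> I)"

definition left_noetherian_on :: "'a::ring_1 set \<Rightarrow> bool" where
  "left_noetherian_on R \<longleftrightarrow> (\<forall>I :: nat \<Rightarrow> 'a set.
     (\<forall>k. left_ideal_of R (I k)) \<and> (\<forall>k. I k \<subseteq> I (Suc k)) \<longrightarrow> (\<exists>m. \<forall>k\<ge>m. I k = I m))"

definition right_noetherian_on :: "'a::ring_1 set \<Rightarrow> bool" where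
  "right_noetherian_on R \<longleftrightarrow> (\<forall>I :: nat \<Rightarrow> 'a set.
     (\<forall>k. right_ideal_of R (I k)) \<and> (\<forall>k. I k \<subseteq> I (Suc k)) \<longrightarrow> (\<exists>m. \<forall>k\<ge>m. I k = I m))"

definition left_ore_domain_on :: "'a::ring_1 set \<Rightarrow> bool" where
  "left_ore_domain_on D \<longleftrightarrow> domain_on D \<and>
     (\<forall>a\<in>D. \<forall>b\<in>D. b \<noteq> 0 \<longrightarrow> (\<exists>p\<in>D. \<exists>q\<in>D. p \<noteq> 0 \<and> p * a = q * b))"

definition right_ore_domain_on :: "'a::ring_1 set \<Rightarrow> bool" where
  "right_ore_domain_on D \<longleftrightarrow> domain_on D \<and>
     (\<forall>a\<in>D. \<forall>b\<in>D. b \<noteq> 0 \<longrightarrow> (\<exists>p\<in>D. \<exists>q\<in>D. p \<noteq> 0 \<and> a * p = b * q))"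

definition exps :: "nat \<Rightarrow> (nat \<Rightarrow> nat) set" where
  "exps n = {\<alpha>. \<forall>i\<ge>n. \<alpha> i = 0}"

definition monom :: "(nat \<Rightarrow> 'a::ring_1) \<Rightarrow> nat \<Rightarrow> (nat \<Rightarrow> nat) \<Rightarrow> 'a" where
  "monom x n \<alpha> = prod_list (map (\<lambda>i. x i ^ \<alpha> i) [0..<n])"

definition free_left_basis :: "'a::ring_1 set \<Rightarrow> (nat \<Rightarrow> 'a) \<Rightarrow> nat \<Rightarrow> bool" where
  "free_left_basis R x n \<longleftrightarrow>
     (\<forall>a::'a. \<exists>S c. finite S \<and> S \<subseteq> exps n \<and> (\<forall>\<beta>\<in>S. c \<beta> \<in> R) \<and>
        a = (\<Sum>\<beta>\<in>S. c \<beta> * monom x n \<beta>)) \<and>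
     (\<forall>S c. finite S \<and> S \<subseteq> exps n \<and> (\<forall>\<beta>\<in>S. c \<beta> \<in> R) \<and>
        (\<Sum>\<beta>\<in>S. c \<beta> * monom x n \<beta>) = 0 \<longrightarrow> (\<forall>\<beta>\<in>S. c \<beta> = 0))"

definition lin_span :: "'a::ring_1 set \<Rightarrow> (nat \<Rightarrow> 'a) \<Rightarrow> nat \<Rightarrow> 'a set" where
  "lin_span R x n = {r0 + (\<Sum>k<n. r k * x k) | r0 r. r0 \<in> R \<and> (\<forall>k<n. r k \<in> R)}"

definition skew_PBW :: "'a::ring_1 set \<Rightarrow> (nat \<Rightarrow> 'a) \<Rightarrow> nat \<Rightarrow> bool" where
  "skew_PBW R x n \<longleftrightarrow>
     subring_of R \<and>
     free_left_basis R x n \<and>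
     (\<forall>i<n. \<forall>r\<in>R. r \<noteq> 0 \<longrightarrow> (\<exists>c\<in>R. c \<noteq> 0 \<and> x i * r - c * x i \<in> R)) \<and>
     (\<forall>i<n. \<forall>j<n. \<exists>c\<in>R. c \<noteq> 0 \<and> x j * x i - c * x i * x j \<in> lin_span R x n)"

text \<open>Bijective: each sigma_i (with x_i r = sigma_i(r) x_i + delta_i(r)) is a bijection of R,
  and the c_{i,j} (i<j) are invertible in R.\<close>
definition bijective_skew_PBW :: "'a::ring_1 set \<Rightarrow> (nat \<Rightarrow> 'a) \<Rightarrow> nat \<Rightarrow> bool" where
  "bijective_skew_PBW R x n \<longleftrightarrow>
     skew_PBW R x n \<and>
     (\<forall>i<n. \<exists>\<sigma>. bij_betw \<sigma> R R \<and> (\<forall>r\<in>R. x i * r - \<sigma> r * x i \<in> R)) \<and>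
     (\<forall>i<n. \<forall>j<n. i < j \<longrightarrow> (\<exists>c\<in>R. (\<exists>d\<in>R. c * d = 1 \<and> d * c = 1) \<and>
          x j * x i - c * x i * x j \<in> lin_span R x n))"

end

theory Submission
  imports Defs
begin

definition vadd :: "(nat \<Rightarrow> nat) \<Rightarrow> (nat \<Rightarrow> nat) \<Rightarrow> nat \<Rightarrow> nat" where
  "vadd \<alpha> \<beta> = (\<lambda>i. \<alpha> i + \<beta> i)"

definition unitv :: "nat \<Rightarrow> nat \<Rightarrow> nat" where
  "unitv i = (\<lambda>j. if j = i then 1 else 0)"

locale spbw =
  fixes R :: "'a::ring_1 set" and x :: "nat \<Rightarrow> 'a" and n :: nat
  assumes bijPBW: "bijective_skew_PBW R x n" and domR: "domain_on R"
begin

definition deg :: "(nat \<Rightarrow> nat) \<Rightarrow> nat" where "deg \<gamma> = (\<Sum>i<n. \<gamma> i)"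
definition mon :: "(nat \<Rightarrow> nat) \<Rightarrow> 'a" where "mon \<gamma> = monom x n \<gamma>"
definition B :: "nat \<Rightarrow> (nat \<Rightarrow> nat) set" where "B k = {\<gamma>\<in>exps n. deg \<gamma> < k}"
definition Lt :: "nat \<Rightarrow> 'a set" where
  "Lt k = {(\<Sum>\<gamma>\<in>B k. c \<gamma> * mon \<gamma>) | c. \<forall>\<gamma>\<in>B k. c \<gamma> \<in> R}"

lemma sub: "subring_of R" using bijPBW unfolding bijective_skew_PBW_def skew_PBW_def by auto
lemma R0: "0 \<in> R" using sub unfolding subring_of_def by auto
lemma R1: "1 \<in> R" using sub unfolding subring_of_def by auto
lemma Radd: "a \<in> R \<Longrightarrow> b \<in> R \<Longrightarrow> a + b \<in> R" using sub unfolding subring_of_def by auto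
lemma Rdiff: "a \<in> R \<Longrightarrow> b \<in> R \<Longrightarrow> a - b \<in> R" using sub unfolding subring_of_def by auto
lemma Rmult: "a \<in> R \<Longrightarrow> b \<in> R \<Longrightarrow> a * b \<in> R" using sub unfolding subring_of_def by auto
lemma Rneg: "a \<in> R \<Longrightarrow> - a \<in> R" using Rdiff[OF R0, of a] by simp
lemma Rsum: "finite S \<Longrightarrow> (\<And>i. i \<in> S \<Longrightarrow> f i \<in> R) \<Longrightarrow> sum f S \<in> R"
  by (induction S rule: finite_induct) (auto intro: R0 Radd)
lemma Rdom: "a \<in> R \<Longrightarrow> b \<in> R \<Longrightarrow> a \<noteq> 0 \<Longrightarrow> b \<noteq> 0 \<Longrightarrow> a * b \<noteq> 0"
  using domR unfolding domain_on_def by auto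
lemma one_neq_zero: "(1::'a) \<noteq> 0" using domR unfolding domain_on_def by auto

lemma freeb: "free_left_basis R x n" using bijPBW unfolding bijective_skew_PBW_def skew_PBW_def by auto

lemma spanning: "\<exists>S c. finite S \<and> S \<subseteq> exps n \<and> (\<forall>\<beta>\<in>S. c \<beta> \<in> R) \<and> a = (\<Sum>\<beta>\<in>S. c \<beta> * mon \<beta>)"
  using freeb unfolding free_left_basis_def mon_def by blast

lemma indep: "finite S \<Longrightarrow> S \<subseteq> exps n \<Longrightarrow> (\<forall>\<beta>\<in>S. c \<beta> \<in> R) \<Longrightarrow>
   (\<Sum>\<beta>\<in>S. c \<beta> * mon \<beta>) = 0 \<Longrightarrow> \<beta> \<in> S \<Longrightarrow> c \<beta> = 0"
  using freeb unfolding free_left_basis_def mon_def by blast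

lemma finB: "finite (B k)"
proof -
  have "B k \<subseteq> {f. \<forall>i. (i \<in> {..<n} \<longrightarrow> f i \<in> {..<k}) \<and> (i \<notin> {..<n} \<longrightarrow> f i = 0)}"
  proof
    fix \<gamma> assume g: "\<gamma> \<in> B k"
    have "\<gamma> i < k" if "i < n" for i
    proof -
      have "\<gamma> i \<le> deg \<gamma>" unfolding deg_def using that by (intro member_le_sum) auto
      thus ?thesis using g unfolding B_def by auto
    qed
    thus "\<gamma> \<in> {f. \<forall>i. (i \<in> {..<n} \<longrightarrow> f i \<in> {..<k}) \<and> (i \<notin> {..<n} \<longrightarrow> f i = 0)}"
      using g unfolding B_def exps_def by auto
  qed
  thus ?thesis by (rule finite_subset) (rule finite_set_of_finite_funs; simp)
qed

lemma BE: "\<gamma> \<in> B k \<Longrightarrow> \<gamma> \<in> exps n" unfolding B_def by auto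

lemma LtI: "(\<And>\<gamma>. \<gamma> \<in> B k \<Longrightarrow> c \<gamma> \<in> R) \<Longrightarrow> (\<Sum>\<gamma>\<in>B k. c \<gamma> * mon \<gamma>) \<in> Lt k"
  unfolding Lt_def by blast

lemma LtE: "a \<in> Lt k \<Longrightarrow> (\<And>c. (\<And>\<gamma>. \<gamma> \<in> B k \<Longrightarrow> c \<gamma> \<in> R) \<Longrightarrow> a = (\<Sum>\<gamma>\<in>B k. c \<gamma> * mon \<gamma>) \<Longrightarrow> P) \<Longrightarrow> P"
  unfolding Lt_def by blast

lemma Lt0: "0 \<in> Lt k"
  using LtI[of k "\<lambda>_. 0"] R0 by simp

lemma Lt_add: "a \<in> Lt k \<Longrightarrow> b \<in> Lt k \<Longrightarrow> a + b \<in> Lt k"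
proof -
  assume "a \<in> Lt k" "b \<in> Lt k"
  then obtain c d where c: "\<And>\<gamma>. \<gamma> \<in> B k \<Longrightarrow> c \<gamma> \<in> R" "a = (\<Sum>\<gamma>\<in>B k. c \<gamma> * mon \<gamma>)"
    and d: "\<And>\<gamma>. \<gamma> \<in> B k \<Longrightarrow> d \<gamma> \<in> R" "b = (\<Sum>\<gamma>\<in>B k. d \<gamma> * mon \<gamma>)"
    by (metis LtE)
  have "a + b = (\<Sum>\<gamma>\<in>B k. (c \<gamma> + d \<gamma>) * mon \<gamma>)"
    unfolding c d by (simp add: sum.distrib distrib_right)
  thus ?thesis using LtI[of k "\<lambda>\<gamma>. c \<gamma> + d \<gamma>"] c d Radd by auto
qed

lemma Lt_lmult: "r \<in> R \<Longrightarrow> a \<in> Lt k \<Longrightarrow> r * a \<in> Lt k"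
proof -
  assume r: "r \<in> R" and "a \<in> Lt k"
  then obtain c where c: "\<And>\<gamma>. \<gamma> \<in> B k \<Longrightarrow> c \<gamma> \<in> R" "a = (\<Sum>\<gamma>\<in>B k. c \<gamma> * mon \<gamma>)"
    by (metis LtE)
  have "r * a = (\<Sum>\<gamma>\<in>B k. (r * c \<gamma>) * mon \<gamma>)"
    unfolding c by (simp add: sum_distrib_left mult.assoc)
  thus ?thesis using LtI[of k "\<lambda>\<gamma>. r * c \<gamma>"] c r Rmult by auto
qed

lemma Lt_neg: "a \<in> Lt k \<Longrightarrow> - a \<in> Lt k"
  using Lt_lmult[OF Rneg[OF R1]] by simp

lemma Lt_diff: "a \<in> Lt k \<Longrightarrow> b \<in> Lt k \<Longrightarrow> a - b \<in> Lt k"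
  using Lt_add Lt_neg by (metis diff_conv_add_uminus)

lemma Lt_sum: "finite S \<Longrightarrow> (\<And>i. i \<in> S \<Longrightarrow> f i \<in> Lt k) \<Longrightarrow> sum f S \<in> Lt k"
  by (induction S rule: finite_induct) (auto intro: Lt0 Lt_add)

lemma B_mono: "k \<le> k' \<Longrightarrow> B k \<subseteq> B k'" unfolding B_def by auto

lemma Lt_mono: "k \<le> k' \<Longrightarrow> a \<in> Lt k \<Longrightarrow> a \<in> Lt k'"
proof -
  assume kk: "k \<le> k'" and "a \<in> Lt k"
  then obtain c where c: "\<And>\<gamma>. \<gamma> \<in> B k \<Longrightarrow> c \<gamma> \<in> R" "a = (\<Sum>\<gamma>\<in>B k. c \<gamma> * mon \<gamma>)"
    by (metis LtE)
  define c' where "c' \<gamma> = (if \<gamma> \<in> B k then c \<gamma> else 0)" for \<gamma>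
  have "a = (\<Sum>\<gamma>\<in>B k'. c' \<gamma> * mon \<gamma>)"
    unfolding c c'_def
    by (rule sum.mono_neutral_cong_left) (use finB B_mono[OF kk] in auto)
  thus ?thesis using LtI[of k' c'] c R0 unfolding c'_def by auto
qed

lemma mon_Lt: "\<gamma> \<in> exps n \<Longrightarrow> deg \<gamma> < k \<Longrightarrow> r \<in> R \<Longrightarrow> r * mon \<gamma> \<in> Lt k"
proof -
  assume g: "\<gamma> \<in> exps n" "deg \<gamma> < k" and r: "r \<in> R"
  hence gB: "\<gamma> \<in> B k" unfolding B_def by auto
  define c where "c \<delta> = (if \<delta> = \<gamma> then r else 0)" for \<delta>
  have "(\<Sum>\<delta>\<in>B k. c \<delta> * mon \<delta>) = (\<Sum>\<delta>\<in>B k. if \<delta> = \<gamma> then r * mon \<delta> else 0)"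
    by (rule sum.cong) (auto simp: c_def)
  also have "\<dots> = r * mon \<gamma>" using finB gB by simp
  finally have "(\<Sum>\<delta>\<in>B k. c \<delta> * mon \<delta>) = r * mon \<gamma>" .
  thus ?thesis using LtI[of k c] r R0 unfolding c_def by (metis (full_types))
qed

lemma mon_Lt1: "\<gamma> \<in> exps n \<Longrightarrow> deg \<gamma> < k \<Longrightarrow> mon \<gamma> \<in> Lt k"
  using mon_Lt[OF _ _ R1] by simp

lemma in_some_Lt: "\<exists>k. a \<in> Lt k"
proof -
  obtain S c where S: "finite S" "S \<subseteq> exps n" "\<forall>\<beta>\<in>S. c \<beta> \<in> R" "a = (\<Sum>\<beta>\<in>S. c \<beta> * mon \<beta>)"
    using spanning[of a] by (elim exE conjE) blast
  define k where "k = Suc (Max (deg ` S))"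
  have "\<forall>\<beta>\<in>S. deg \<beta> < k"
  proof
    fix \<beta> assume "\<beta> \<in> S"
    hence "deg \<beta> \<le> Max (deg ` S)" using S(1) by (intro Max_ge) auto
    thus "deg \<beta> < k" unfolding k_def by linarith
  qed
  hence "c \<beta> * mon \<beta> \<in> Lt k" if "\<beta> \<in> S" for \<beta>
    using S(2,3) that by (intro mon_Lt) auto
  hence "a \<in> Lt k" unfolding S(4) using S(1) by (intro Lt_sum)
  thus ?thesis by blast
qed

lemma Lt_unique: "(\<And>\<gamma>. \<gamma> \<in> B k \<Longrightarrow> c \<gamma> \<in> R) \<Longrightarrow> (\<And>\<gamma>. \<gamma> \<in> B k \<Longrightarrow> d \<gamma> \<in> R) \<Longrightarrow>
  (\<Sum>\<gamma>\<in>B k. c \<gamma> * mon \<gamma>) = (\<Sum>\<gamma>\<in>B k. d \<gamma> * mon \<gamma>) \<Longrightarrow> \<gamma> \<in> B k \<Longrightarrow> c \<gamma> = d \<gamma>"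
proof -
  assume c: "\<And>\<gamma>. \<gamma> \<in> B k \<Longrightarrow> c \<gamma> \<in> R" and d: "\<And>\<gamma>. \<gamma> \<in> B k \<Longrightarrow> d \<gamma> \<in> R"
    and eq: "(\<Sum>\<gamma>\<in>B k. c \<gamma> * mon \<gamma>) = (\<Sum>\<gamma>\<in>B k. d \<gamma> * mon \<gamma>)" and g: "\<gamma> \<in> B k"
  have "(\<Sum>\<gamma>\<in>B k. (c \<gamma> - d \<gamma>) * mon \<gamma>) = 0"
    using eq by (simp add: left_diff_distrib sum_subtractf)
  hence "c \<gamma> - d \<gamma> = 0"
    using indep[of "B k" "\<lambda>\<gamma>. c \<gamma> - d \<gamma>"] finB g c d Rdiff BE by blast
  thus ?thesis by simp
qed

end

context spbw begin

lemma exps_vadd: "\<alpha> \<in> exps n \<Longrightarrow> \<beta> \<in> exps n \<Longrightarrow> vadd \<alpha> \<beta> \<in> exps n"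
  unfolding exps_def vadd_def by auto
lemma exps_unitv: "i < n \<Longrightarrow> unitv i \<in> exps n"
  unfolding exps_def unitv_def by auto
lemma deg_vadd: "deg (vadd \<alpha> \<beta>) = deg \<alpha> + deg \<beta>"
  unfolding deg_def vadd_def by (simp add: sum.distrib)
lemma deg_unitv: "i < n \<Longrightarrow> deg (unitv i) = 1"
  unfolding deg_def unitv_def by (simp add: sum.delta)
lemma vadd_comm: "vadd \<alpha> \<beta> = vadd \<beta> \<alpha>" unfolding vadd_def by auto
lemma vadd_assoc: "vadd (vadd \<alpha> \<beta>) \<gamma> = vadd \<alpha> (vadd \<beta> \<gamma>)" unfolding vadd_def by auto
lemma vadd_zero: "vadd (\<lambda>_. 0) \<beta> = \<beta>" unfolding vadd_def by auto

lemma mon_split: "i < n \<Longrightarrow> (\<forall>l<i. \<gamma> l = 0) \<Longrightarrow>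
   mon \<gamma> = x i ^ \<gamma> i * prod_list (map (\<lambda>l. x l ^ \<gamma> l) [Suc i..<n])"
proof -
  assume i: "i < n" and z: "\<forall>l<i. \<gamma> l = 0"
  have "[0..<n] = [0..<i] @ [i..<n]" using upt_add_eq_append[of 0 i "n - i"] i by simp
  also have "[i..<n] = i # [Suc i..<n]" using i by (simp add: upt_conv_Cons)
  finally have "[0..<n] = [0..<i] @ i # [Suc i..<n]" .
  moreover have "prod_list (map (\<lambda>l. x l ^ \<gamma> l) [0..<i]) = 1"
    using z by (induction i) auto
  ultimately show ?thesis unfolding mon_def monom_def by simp
qed

lemma mon_zero: "mon (\<lambda>_. 0) = 1"
  unfolding mon_def monom_def by (induction n) auto

lemma mon_cons: "i < n \<Longrightarrow> (\<forall>l<i. \<gamma> l = 0) \<Longrightarrow> mon (vadd (unitv i) \<gamma>) = x i * mon \<gamma>"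
proof -
  assume i: "i < n" and z: "\<forall>l<i. \<gamma> l = 0"
  have z2: "\<forall>l<i. vadd (unitv i) \<gamma> l = 0" using z unfolding vadd_def unitv_def by auto
  have eq: "map (\<lambda>l. x l ^ vadd (unitv i) \<gamma> l) [Suc i..<n] = map (\<lambda>l. x l ^ \<gamma> l) [Suc i..<n]"
    unfolding vadd_def unitv_def by auto
  show ?thesis
    unfolding mon_split[OF i z] mon_split[OF i z2] eq
    by (simp add: vadd_def unitv_def mult.assoc)
qed

lemma mon_unitv: "i < n \<Longrightarrow> mon (unitv i) = x i"
  using mon_cons[of i "\<lambda>_. 0"] mon_zero by (simp add: vadd_def)

lemma zero_exps: "(\<lambda>_. 0) \<in> exps n" unfolding exps_def by auto
lemma deg_zero: "deg (\<lambda>_. 0) = 0" unfolding deg_def by simp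

lemma deg0: "\<gamma> \<in> exps n \<Longrightarrow> deg \<gamma> = 0 \<Longrightarrow> \<gamma> = (\<lambda>_. 0)"
proof (rule ext)
  fix l assume g: "\<gamma> \<in> exps n" and d: "deg \<gamma> = 0"
  show "\<gamma> l = 0"
  proof (cases "l < n")
    case True
    have "\<forall>i\<in>{..<n}. \<gamma> i = 0" using d unfolding deg_def by simp
    thus ?thesis using True by simp
  next
    case False thus ?thesis using g unfolding exps_def by simp
  qed
qed

lemma decomp:
  assumes g: "\<gamma> \<in> exps n" and j: "j < n" "\<gamma> j \<noteq> 0" and least: "\<forall>l<j. \<gamma> l = 0"
  shows "\<gamma> = vadd (unitv j) (\<gamma>(j := \<gamma> j - 1))" "\<gamma>(j := \<gamma> j - 1) \<in> exps n"
    "\<forall>l<j. (\<gamma>(j := \<gamma> j - 1)) l = 0" "deg \<gamma> = Suc (deg (\<gamma>(j := \<gamma> j - 1)))"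
proof -
  show 1: "\<gamma> = vadd (unitv j) (\<gamma>(j := \<gamma> j - 1))"
    using j unfolding vadd_def unitv_def by auto
  show 2: "\<gamma>(j := \<gamma> j - 1) \<in> exps n" using g j unfolding exps_def by auto
  show "\<forall>l<j. (\<gamma>(j := \<gamma> j - 1)) l = 0" using least by auto
  show "deg \<gamma> = Suc (deg (\<gamma>(j := \<gamma> j - 1)))"
    by (subst 1) (simp add: deg_vadd deg_unitv j)
qed

lemma least_nz:
  fixes \<gamma> :: "nat \<Rightarrow> nat" and i :: nat
  assumes "\<exists>l<i. \<gamma> l \<noteq> 0"
  obtains j where "j < i" "\<gamma> j \<noteq> 0" "\<forall>l<j. \<gamma> l = 0"
proof -
  define j where "j = (LEAST l. \<gamma> l \<noteq> 0)"
  from assms obtain l where l: "l < i" "\<gamma> l \<noteq> 0" by blast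
  have "\<gamma> j \<noteq> 0" unfolding j_def using l(2) by (rule LeastI[where P="\<lambda>l. \<gamma> l \<noteq> 0"])
  moreover have "j \<le> l" unfolding j_def by (rule Least_le) (rule l(2))
  moreover have "\<forall>l<j. \<gamma> l = 0" unfolding j_def using not_less_Least by blast
  ultimately have "j < i" "\<gamma> j \<noteq> 0" "\<forall>l<j. \<gamma> l = 0" using l(1) by auto
  thus ?thesis by (rule that)
qed

definition sig :: "nat \<Rightarrow> 'a \<Rightarrow> 'a" where
  "sig i = (SOME \<sigma>. bij_betw \<sigma> R R \<and> (\<forall>r\<in>R. x i * r - \<sigma> r * x i \<in> R))"

lemma sig_props: "i < n \<Longrightarrow> bij_betw (sig i) R R \<and> (\<forall>r\<in>R. x i * r - sig i r * x i \<in> R)"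
proof -
  assume i: "i < n"
  have "\<exists>\<sigma>. bij_betw \<sigma> R R \<and> (\<forall>r\<in>R. x i * r - \<sigma> r * x i \<in> R)"
    using bijPBW i unfolding bijective_skew_PBW_def by blast
  thus ?thesis unfolding sig_def by (rule someI_ex)
qed

lemma sig_bij: "i < n \<Longrightarrow> bij_betw (sig i) R R" using sig_props by blast
lemma sig_R: "i < n \<Longrightarrow> r \<in> R \<Longrightarrow> sig i r \<in> R" using sig_bij bij_betwE by blast
lemma sig_comm: "i < n \<Longrightarrow> r \<in> R \<Longrightarrow> x i * r - sig i r * x i \<in> R" using sig_props by blast

lemma sig0: "i < n \<Longrightarrow> sig i 0 = 0"
proof -
  assume i: "i < n"
  define t where "t = x i * 0 - sig i 0 * x i"
  have t: "t \<in> R" unfolding t_def using sig_comm[OF i R0] .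
  have ne: "unitv i \<noteq> (\<lambda>_. 0)" unfolding unitv_def by (metis zero_neq_one)
  define c where "c \<gamma> = (if \<gamma> = unitv i then sig i 0 else t)" for \<gamma>
  have "(\<Sum>\<beta>\<in>{unitv i, \<lambda>_. 0}. c \<beta> * mon \<beta>) = sig i 0 * x i + t"
    using ne by (simp add: c_def mon_unitv[OF i] mon_zero)
  also have "\<dots> = 0" unfolding t_def by simp
  finally have "c (unitv i) = 0"
    using indep[of "{unitv i, \<lambda>_. 0}" c "unitv i"] exps_unitv[OF i] zero_exps t sig_R[OF i R0]
    unfolding c_def by auto
  thus ?thesis unfolding c_def by simp
qed

lemma sig_nz: "i < n \<Longrightarrow> r \<in> R \<Longrightarrow> r \<noteq> 0 \<Longrightarrow> sig i r \<noteq> 0"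
proof -
  assume i: "i < n" and r: "r \<in> R" "r \<noteq> 0"
  show "sig i r \<noteq> 0"
  proof
    assume z: "sig i r = 0"
    have "inj_on (sig i) R" using sig_bij[OF i] by (rule bij_betw_imp_inj_on)
    moreover have "sig i r = sig i 0" using z sig0[OF i] by simp
    ultimately have "r = 0" using r R0 by (auto dest: inj_onD)
    thus False using r by simp
  qed
qed

lemma lin_span_Lt: "l \<in> lin_span R x n \<Longrightarrow> l \<in> Lt 2"
proof -
  assume "l \<in> lin_span R x n"
  then obtain r0 r where l: "l = r0 + (\<Sum>k<n. r k * x k)" "r0 \<in> R" "\<forall>k<n. r k \<in> R"
    unfolding lin_span_def by blast
  have "r0 = r0 * mon (\<lambda>_. 0)" by (simp add: mon_zero)
  hence a: "r0 \<in> Lt 2" using mon_Lt[OF zero_exps _ l(2), of 2] deg_zero by simp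
  have "r k * x k \<in> Lt 2" if "k < n" for k
    using mon_Lt[OF exps_unitv[OF that] _ , of 2 "r k"] l(3) that by (simp add: deg_unitv mon_unitv)
  hence "(\<Sum>k<n. r k * x k) \<in> Lt 2" by (intro Lt_sum) auto
  thus ?thesis using a l(1) Lt_add by simp
qed

lemma rel: "j < n \<Longrightarrow> i < n \<Longrightarrow> \<exists>c\<in>R. c \<noteq> 0 \<and> x i * x j - c * x j * x i \<in> lin_span R x n"
proof -
  assume ji: "j < n" "i < n"
  have "skew_PBW R x n" using bijPBW by (simp add: bijective_skew_PBW_def)
  hence "\<forall>i<n. \<forall>j<n. \<exists>c\<in>R. c \<noteq> 0 \<and> x j * x i - c * x i * x j \<in> lin_span R x n"
    unfolding skew_PBW_def by (elim conjE)
  thus ?thesis using ji by simp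
qed

end

context spbw begin

lemma xi_Lt:
  assumes H: "\<forall>\<gamma>\<in>exps n. deg \<gamma> \<le> k \<longrightarrow> (\<forall>i<n. x i * mon \<gamma> \<in> Lt (Suc (Suc k)))"
    and m: "m \<in> Lt (Suc k)" and i: "i < n"
  shows "x i * m \<in> Lt (Suc (Suc k))"
proof -
  obtain c where c: "\<And>\<gamma>. \<gamma> \<in> B (Suc k) \<Longrightarrow> c \<gamma> \<in> R" "m = (\<Sum>\<gamma>\<in>B (Suc k). c \<gamma> * mon \<gamma>)"
    using m by (metis LtE)
  have "x i * (c \<gamma> * mon \<gamma>) \<in> Lt (Suc (Suc k))" if g: "\<gamma> \<in> B (Suc k)" for \<gamma>
  proof -
    define \<delta> where "\<delta> = x i * c \<gamma> - sig i (c \<gamma>) * x i"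
    have \<delta>: "\<delta> \<in> R" unfolding \<delta>_def using sig_comm[OF i c(1)[OF g]] .
    have eq: "x i * (c \<gamma> * mon \<gamma>) = \<delta> * mon \<gamma> + sig i (c \<gamma>) * (x i * mon \<gamma>)"
      unfolding \<delta>_def by (simp add: algebra_simps)
    have gE: "\<gamma> \<in> exps n" "deg \<gamma> < Suc k" using g unfolding B_def by auto
    have "\<delta> * mon \<gamma> \<in> Lt (Suc (Suc k))" using mon_Lt[OF gE(1) _ \<delta>] gE(2) by simp
    moreover have "sig i (c \<gamma>) * (x i * mon \<gamma>) \<in> Lt (Suc (Suc k))"
      using H gE i by (intro Lt_lmult[OF sig_R[OF i c(1)[OF g]]]) auto
    ultimately show ?thesis unfolding eq by (rule Lt_add)
  qed
  hence "(\<Sum>\<gamma>\<in>B (Suc k). x i * (c \<gamma> * mon \<gamma>)) \<in> Lt (Suc (Suc k))"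
    using finB by (intro Lt_sum) auto
  thus ?thesis unfolding c(2) by (simp add: sum_distrib_left)
qed

lemma linspan_mon:
  assumes H: "\<forall>\<gamma>\<in>exps n. deg \<gamma> \<le> k \<longrightarrow> (\<forall>i<n. x i * mon \<gamma> \<in> Lt (Suc (Suc k)))"
    and l: "l \<in> lin_span R x n" and g: "\<gamma> \<in> exps n" "deg \<gamma> \<le> k"
  shows "l * mon \<gamma> \<in> Lt (Suc (Suc k))"
proof -
  obtain r0 r where lr: "l = r0 + (\<Sum>k<n. r k * x k)" "r0 \<in> R" "\<forall>k<n. r k \<in> R"
    using l unfolding lin_span_def by blast
  have a: "r0 * mon \<gamma> \<in> Lt (Suc (Suc k))" using mon_Lt[OF g(1) _ lr(2)] g(2) by simp
  have "r j * (x j * mon \<gamma>) \<in> Lt (Suc (Suc k))" if "j < n" for j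
    using H g that lr(3) by (intro Lt_lmult[of "r j"]) auto
  hence "(\<Sum>j<n. r j * (x j * mon \<gamma>)) \<in> Lt (Suc (Suc k))" by (intro Lt_sum) auto
  moreover have "l * mon \<gamma> = r0 * mon \<gamma> + (\<Sum>j<n. r j * (x j * mon \<gamma>))"
    unfolding lr(1) by (simp add: distrib_right sum_distrib_right mult.assoc)
  ultimately show ?thesis using a Lt_add by simp
qed

lemma Q: "\<beta> \<in> exps n \<Longrightarrow> i < n \<Longrightarrow>
   \<exists>c\<in>R. c \<noteq> 0 \<and> x i * mon \<beta> - c * mon (vadd (unitv i) \<beta>) \<in> Lt (Suc (deg \<beta>))"
proof (induction "deg \<beta>" arbitrary: \<beta> i rule: less_induct)
  case less
  note bE = less.prems(1) and i = less.prems(2)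
  show ?case
  proof (cases "\<forall>l<i. \<beta> l = 0")
    case True
    have "x i * mon \<beta> - 1 * mon (vadd (unitv i) \<beta>) = 0" using mon_cons[OF i True] by simp
    hence "x i * mon \<beta> - 1 * mon (vadd (unitv i) \<beta>) \<in> Lt (Suc (deg \<beta>))" using Lt0 by simp
    thus ?thesis using R1 one_neq_zero by blast
  next
    case False
    hence "\<exists>l<i. \<beta> l \<noteq> 0" by auto
    then obtain j where j: "j < i" "\<beta> j \<noteq> 0" "\<forall>l<j. \<beta> l = 0" by (rule least_nz)
    have jn: "j < n" using j i by simp
    define \<beta>' where "\<beta>' = \<beta>(j := \<beta> j - 1)"
    note D = decomp[OF bE jn j(2) j(3), folded \<beta>'_def]
    define k where "k = deg \<beta>'"
    have dk: "deg \<beta> = Suc k" using D(4) unfolding k_def .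
    have H: "\<forall>\<gamma>\<in>exps n. deg \<gamma> \<le> k \<longrightarrow> (\<forall>i<n. x i * mon \<gamma> \<in> Lt (Suc (Suc k)))"
    proof (intro ballI impI allI)
      fix \<gamma> i' assume g: "\<gamma> \<in> exps n" "deg \<gamma> \<le> k" and i': "i' < n"
      have "deg \<gamma> < deg \<beta>" using g dk by simp
      then obtain c where c: "c \<in> R" "x i' * mon \<gamma> - c * mon (vadd (unitv i') \<gamma>) \<in> Lt (Suc (deg \<gamma>))"
        using less.hyps g(1) i' by blast
      have "c * mon (vadd (unitv i') \<gamma>) \<in> Lt (Suc (Suc k))"
        using mon_Lt[OF exps_vadd[OF exps_unitv[OF i'] g(1)] _ c(1)] g(2)
        by (simp add: deg_vadd deg_unitv i')
      moreover have "x i' * mon \<gamma> - c * mon (vadd (unitv i') \<gamma>) \<in> Lt (Suc (Suc k))"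
        using c(2) by (rule Lt_mono[rotated]) (use g in simp)
      ultimately show "x i' * mon \<gamma> \<in> Lt (Suc (Suc k))" using Lt_add by fastforce
    qed
    obtain c1 where c1: "c1 \<in> R" "c1 \<noteq> 0" "x i * x j - c1 * x j * x i \<in> lin_span R x n"
      using rel[OF jn i] by blast
    define l where "l = x i * x j - c1 * x j * x i"
    obtain c2 where c2: "c2 \<in> R" "c2 \<noteq> 0"
      "x i * mon \<beta>' - c2 * mon (vadd (unitv i) \<beta>') \<in> Lt (Suc (deg \<beta>'))"
      using less.hyps[of \<beta>' i] D(2) dk i unfolding k_def by auto
    define \<gamma>2 where "\<gamma>2 = vadd (unitv i) \<beta>'"
    define m where "m = x i * mon \<beta>' - c2 * mon \<gamma>2"
    have m: "m \<in> Lt (Suc k)" using c2(3) unfolding m_def \<gamma>2_def k_def .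
    have g2E: "\<gamma>2 \<in> exps n" unfolding \<gamma>2_def by (rule exps_vadd[OF exps_unitv[OF i] D(2)])
    have dg2: "deg \<gamma>2 = Suc k" unfolding \<gamma>2_def k_def by (simp add: deg_vadd deg_unitv i)
    have z2: "\<forall>l<j. \<gamma>2 l = 0" using D(3) j(1) unfolding \<gamma>2_def vadd_def unitv_def by auto
    have tgt: "vadd (unitv j) \<gamma>2 = vadd (unitv i) \<beta>"
    proof -
      have "vadd (unitv i) \<beta> = vadd (unitv i) (vadd (unitv j) \<beta>')" using D(1) by simp
      also have "\<dots> = vadd (unitv j) (vadd (unitv i) \<beta>')" by (simp add: vadd_def fun_eq_iff)
      finally show ?thesis unfolding \<gamma>2_def by simp
    qed
    have xjg2: "x j * mon \<gamma>2 = mon (vadd (unitv i) \<beta>)"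
      using mon_cons[OF jn z2] tgt by simp
    define \<delta> where "\<delta> = x j * c2 - sig j c2 * x j"
    have \<delta>: "\<delta> \<in> R" unfolding \<delta>_def by (rule sig_comm[OF jn c2(1)])
    have mb: "mon \<beta> = x j * mon \<beta>'" using mon_cons[OF jn D(3)] D(1) by simp
    have "x i * mon \<beta> = (x i * x j) * mon \<beta>'" unfolding mb by (simp add: mult.assoc)
    also have "\<dots> = l * mon \<beta>' + c1 * x j * (x i * mon \<beta>')"
      unfolding l_def by (simp add: algebra_simps)
    also have "\<dots> = l * mon \<beta>' + c1 * (x j * c2) * mon \<gamma>2 + c1 * (x j * m)"
      unfolding m_def by (simp add: algebra_simps)
    also have "\<dots> = l * mon \<beta>' + c1 * (\<delta> * mon \<gamma>2) + (c1 * sig j c2) * (x j * mon \<gamma>2) + c1 * (x j * m)"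
      unfolding \<delta>_def by (simp add: algebra_simps)
    finally have eq: "x i * mon \<beta> - (c1 * sig j c2) * mon (vadd (unitv i) \<beta>) =
        l * mon \<beta>' + c1 * (\<delta> * mon \<gamma>2) + c1 * (x j * m)"
      unfolding xjg2 by simp
    have t1: "l * mon \<beta>' \<in> Lt (Suc (Suc k))"
      using linspan_mon[OF H _ D(2)] c1(3) unfolding l_def k_def by simp
    have t2: "c1 * (\<delta> * mon \<gamma>2) \<in> Lt (Suc (Suc k))"
      using mon_Lt[OF g2E _ \<delta>] dg2 c1(1) by (intro Lt_lmult[OF c1(1)]) auto
    have t3: "c1 * (x j * m) \<in> Lt (Suc (Suc k))"
      using xi_Lt[OF H m jn] by (rule Lt_lmult[OF c1(1)])
    have "x i * mon \<beta> - (c1 * sig j c2) * mon (vadd (unitv i) \<beta>) \<in> Lt (Suc (deg \<beta>))"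
      unfolding eq dk using t1 t2 t3 by (intro Lt_add)
    moreover have "c1 * sig j c2 \<in> R" using c1(1) sig_R[OF jn c2(1)] by (rule Rmult)
    moreover have "c1 * sig j c2 \<noteq> 0"
      using Rdom[OF c1(1) sig_R[OF jn c2(1)] c1(2) sig_nz[OF jn c2(1,2)]] .
    ultimately show ?thesis by blast
  qed
qed

end

context spbw begin

lemma Lt0_zero: "m \<in> Lt 0 \<Longrightarrow> m = 0"
proof -
  assume "m \<in> Lt 0"
  then obtain c where "m = (\<Sum>\<gamma>\<in>B 0. c \<gamma> * mon \<gamma>)" by (metis LtE)
  moreover have "B 0 = {}" unfolding B_def by simp
  ultimately show ?thesis by simp
qed

lemma xmon_Lt: "\<gamma> \<in> exps n \<Longrightarrow> i < n \<Longrightarrow> x i * mon \<gamma> \<in> Lt (Suc (Suc (deg \<gamma>)))"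
proof -
  assume g: "\<gamma> \<in> exps n" and i: "i < n"
  obtain c where c: "c \<in> R" "x i * mon \<gamma> - c * mon (vadd (unitv i) \<gamma>) \<in> Lt (Suc (deg \<gamma>))"
    using Q[OF g i] by blast
  have "c * mon (vadd (unitv i) \<gamma>) \<in> Lt (Suc (Suc (deg \<gamma>)))"
    using mon_Lt[OF exps_vadd[OF exps_unitv[OF i] g] _ c(1)] by (simp add: deg_vadd deg_unitv i)
  moreover have "x i * mon \<gamma> - c * mon (vadd (unitv i) \<gamma>) \<in> Lt (Suc (Suc (deg \<gamma>)))"
    using c(2) by (rule Lt_mono[rotated]) simp
  ultimately show ?thesis using Lt_add by fastforce
qed

lemma xLt: "i < n \<Longrightarrow> m \<in> Lt k \<Longrightarrow> x i * m \<in> Lt (Suc k)"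
proof (cases k)
  case 0
  assume "m \<in> Lt k"
  hence "m = 0" using 0 Lt0_zero by simp
  thus ?thesis using Lt0 by simp
next
  case (Suc k')
  assume i: "i < n" and m: "m \<in> Lt k"
  have H: "\<forall>\<gamma>\<in>exps n. deg \<gamma> \<le> k' \<longrightarrow> (\<forall>i<n. x i * mon \<gamma> \<in> Lt (Suc (Suc k')))"
  proof (intro ballI impI allI)
    fix \<gamma> i' assume "\<gamma> \<in> exps n" "deg \<gamma> \<le> k'" "i' < n"
    thus "x i' * mon \<gamma> \<in> Lt (Suc (Suc k'))" using xmon_Lt[of \<gamma> i'] by (auto elim: Lt_mono[rotated])
  qed
  show ?thesis using xi_Lt[OF H _ i] m Suc by simp
qed

lemma nz_decomp:
  assumes a: "\<alpha> \<in> exps n" "deg \<alpha> \<noteq> 0"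
  obtains j \<alpha>' where "j < n" "\<alpha>' \<in> exps n" "\<alpha> = vadd (unitv j) \<alpha>'" "\<forall>l<j. \<alpha>' l = 0"
     "deg \<alpha> = Suc (deg \<alpha>')" "mon \<alpha> = x j * mon \<alpha>'"
proof -
  have "\<alpha> \<noteq> (\<lambda>_. 0)" using a deg_zero by auto
  then obtain l where l: "\<alpha> l \<noteq> 0" by auto
  hence "l < n" using a(1) unfolding exps_def by (cases "l < n") auto
  hence "\<exists>l<n. \<alpha> l \<noteq> 0" using l by blast
  then obtain j where j: "j < n" "\<alpha> j \<noteq> 0" "\<forall>l<j. \<alpha> l = 0" by (rule least_nz)
  note D = decomp[OF a(1) j]
  show ?thesis
    by (rule that[OF j(1) D(2) D(1) D(3) D(4)]) (subst D(1), rule mon_cons[OF j(1) D(3)])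
qed

lemma monLt: "\<alpha> \<in> exps n \<Longrightarrow> m \<in> Lt k \<Longrightarrow> mon \<alpha> * m \<in> Lt (deg \<alpha> + k)"
proof (induction "deg \<alpha>" arbitrary: \<alpha> rule: less_induct)
  case less
  show ?case
  proof (cases "deg \<alpha> = 0")
    case True
    hence "\<alpha> = (\<lambda>_. 0)" using deg0 less.prems by blast
    thus ?thesis using less.prems by (simp add: mon_zero deg_zero)
  next
    case False
    obtain j \<alpha>' where d: "j < n" "\<alpha>' \<in> exps n" "\<alpha> = vadd (unitv j) \<alpha>'" "\<forall>l<j. \<alpha>' l = 0"
      "deg \<alpha> = Suc (deg \<alpha>')" "mon \<alpha> = x j * mon \<alpha>'"
      using nz_decomp[OF less.prems(1) False] by blast
    have "mon \<alpha>' * m \<in> Lt (deg \<alpha>' + k)" using less.hyps[of \<alpha>'] d less.prems by simp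
    hence "x j * (mon \<alpha>' * m) \<in> Lt (Suc (deg \<alpha>' + k))" by (rule xLt[OF d(1)])
    thus ?thesis using d by (simp add: mult.assoc)
  qed
qed

lemma Lt_mult: "a \<in> Lt k1 \<Longrightarrow> b \<in> Lt k2 \<Longrightarrow> a * b \<in> Lt (k1 + k2 - 1)"
proof -
  assume a: "a \<in> Lt k1" and b: "b \<in> Lt k2"
  obtain c where c: "\<And>\<gamma>. \<gamma> \<in> B k1 \<Longrightarrow> c \<gamma> \<in> R" "a = (\<Sum>\<gamma>\<in>B k1. c \<gamma> * mon \<gamma>)"
    using a by (metis LtE)
  have "c \<gamma> * (mon \<gamma> * b) \<in> Lt (k1 + k2 - 1)" if g: "\<gamma> \<in> B k1" for \<gamma>
  proof -
    have gE: "\<gamma> \<in> exps n" "deg \<gamma> < k1" using g unfolding B_def by auto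
    have "mon \<gamma> * b \<in> Lt (deg \<gamma> + k2)" by (rule monLt[OF gE(1) b])
    hence "mon \<gamma> * b \<in> Lt (k1 + k2 - 1)" by (rule Lt_mono[rotated]) (use gE in simp)
    thus ?thesis by (rule Lt_lmult[OF c(1)[OF g]])
  qed
  hence "(\<Sum>\<gamma>\<in>B k1. c \<gamma> * (mon \<gamma> * b)) \<in> Lt (k1 + k2 - 1)" using finB by (intro Lt_sum) auto
  thus ?thesis unfolding c(2) by (simp add: sum_distrib_right mult.assoc)
qed

lemma tau: "\<alpha> \<in> exps n \<Longrightarrow> \<exists>\<tau>. bij_betw \<tau> R R \<and> \<tau> 0 = 0 \<and> (\<forall>s\<in>R. mon \<alpha> * s - \<tau> s * mon \<alpha> \<in> Lt (deg \<alpha>))"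
proof (induction "deg \<alpha>" arbitrary: \<alpha> rule: less_induct)
  case less
  show ?case
  proof (cases "deg \<alpha> = 0")
    case True
    hence "\<alpha> = (\<lambda>_. 0)" using deg0 less.prems by blast
    hence "\<forall>s\<in>R. mon \<alpha> * s - id s * mon \<alpha> \<in> Lt (deg \<alpha>)" by (simp add: mon_zero Lt0)
    moreover have "bij_betw id R R" by simp
    ultimately show ?thesis by (intro exI[of _ id]) simp
  next
    case False
    obtain j \<alpha>' where d: "j < n" "\<alpha>' \<in> exps n" "\<alpha> = vadd (unitv j) \<alpha>'" "\<forall>l<j. \<alpha>' l = 0"
      "deg \<alpha> = Suc (deg \<alpha>')" "mon \<alpha> = x j * mon \<alpha>'"
      using nz_decomp[OF less.prems(1) False] by blast
    obtain \<tau>' where t': "bij_betw \<tau>' R R" "\<tau>' 0 = 0" "\<forall>s\<in>R. mon \<alpha>' * s - \<tau>' s * mon \<alpha>' \<in> Lt (deg \<alpha>')"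
      using less.hyps[of \<alpha>'] d by auto
    define \<tau> where "\<tau> = sig j \<circ> \<tau>'"
    have "bij_betw \<tau> R R" unfolding \<tau>_def using t'(1) sig_bij[OF d(1)] by (rule bij_betw_trans)
    moreover have "\<tau> 0 = 0" unfolding \<tau>_def using t'(2) sig0[OF d(1)] by simp
    moreover have "mon \<alpha> * s - \<tau> s * mon \<alpha> \<in> Lt (deg \<alpha>)" if s: "s \<in> R" for s
    proof -
      define m where "m = mon \<alpha>' * s - \<tau>' s * mon \<alpha>'"
      have m: "m \<in> Lt (deg \<alpha>')" unfolding m_def using t'(3) s by blast
      have ts: "\<tau>' s \<in> R" using t'(1) s bij_betwE by blast
      define \<delta> where "\<delta> = x j * \<tau>' s - sig j (\<tau>' s) * x j"
      have \<delta>: "\<delta> \<in> R" unfolding \<delta>_def by (rule sig_comm[OF d(1) ts])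
      have "mon \<alpha> * s = x j * (\<tau>' s * mon \<alpha>' + m)" unfolding d(6) m_def by (simp add: mult.assoc)
      also have "\<dots> = \<delta> * mon \<alpha>' + sig j (\<tau>' s) * (x j * mon \<alpha>') + x j * m"
        unfolding \<delta>_def by (simp add: algebra_simps)
      finally have eq: "mon \<alpha> * s - \<tau> s * mon \<alpha> = \<delta> * mon \<alpha>' + x j * m"
        unfolding \<tau>_def d(6) by simp
      have "\<delta> * mon \<alpha>' \<in> Lt (deg \<alpha>)" using mon_Lt[OF d(2) _ \<delta>] d(5) by simp
      moreover have "x j * m \<in> Lt (deg \<alpha>)" using xLt[OF d(1) m] d(5) by simp
      ultimately show ?thesis unfolding eq by (rule Lt_add)
    qed
    ultimately show ?thesis by blast
  qed
qed

lemma lead: "\<alpha> \<in> exps n \<Longrightarrow> \<beta> \<in> exps n \<Longrightarrow>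
  \<exists>c\<in>R. c \<noteq> 0 \<and> mon \<alpha> * mon \<beta> - c * mon (vadd \<alpha> \<beta>) \<in> Lt (deg \<alpha> + deg \<beta>)"
proof (induction "deg \<alpha>" arbitrary: \<alpha> rule: less_induct)
  case less
  note bE = less.prems(2)
  show ?case
  proof (cases "deg \<alpha> = 0")
    case True
    hence "\<alpha> = (\<lambda>_. 0)" using deg0 less.prems by blast
    hence "mon \<alpha> * mon \<beta> - 1 * mon (vadd \<alpha> \<beta>) \<in> Lt (deg \<alpha> + deg \<beta>)"
      by (simp add: mon_zero vadd_zero Lt0)
    thus ?thesis using R1 one_neq_zero by blast
  next
    case False
    obtain j \<alpha>' where d: "j < n" "\<alpha>' \<in> exps n" "\<alpha> = vadd (unitv j) \<alpha>'" "\<forall>l<j. \<alpha>' l = 0"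
      "deg \<alpha> = Suc (deg \<alpha>')" "mon \<alpha> = x j * mon \<alpha>'"
      using nz_decomp[OF less.prems(1) False] by blast
    obtain c' where c': "c' \<in> R" "c' \<noteq> 0" "mon \<alpha>' * mon \<beta> - c' * mon (vadd \<alpha>' \<beta>) \<in> Lt (deg \<alpha>' + deg \<beta>)"
      using less.hyps[of \<alpha>'] d bE by auto
    define \<gamma> where "\<gamma> = vadd \<alpha>' \<beta>"
    have gE: "\<gamma> \<in> exps n" unfolding \<gamma>_def by (rule exps_vadd[OF d(2) bE])
    have dg: "deg \<gamma> = deg \<alpha>' + deg \<beta>" unfolding \<gamma>_def by (simp add: deg_vadd)
    obtain c'' where c'': "c'' \<in> R" "c'' \<noteq> 0" "x j * mon \<gamma> - c'' * mon (vadd (unitv j) \<gamma>) \<in> Lt (Suc (deg \<gamma>))"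
      using Q[OF gE d(1)] by blast
    have vv: "vadd (unitv j) \<gamma> = vadd \<alpha> \<beta>" unfolding \<gamma>_def d(3) by (simp add: vadd_def add.assoc)
    define m where "m = mon \<alpha>' * mon \<beta> - c' * mon \<gamma>"
    have m: "m \<in> Lt (deg \<alpha>' + deg \<beta>)" using c'(3) unfolding m_def \<gamma>_def .
    define m2 where "m2 = x j * mon \<gamma> - c'' * mon (vadd \<alpha> \<beta>)"
    have m2: "m2 \<in> Lt (deg \<alpha> + deg \<beta>)" using c''(3) unfolding m2_def vv dg d(5) by simp
    define \<delta> where "\<delta> = x j * c' - sig j c' * x j"
    have \<delta>: "\<delta> \<in> R" unfolding \<delta>_def by (rule sig_comm[OF d(1) c'(1)])
    have "mon \<alpha> * mon \<beta> = x j * (c' * mon \<gamma> + m)" unfolding d(6) m_def by (simp add: mult.assoc)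
    also have "\<dots> = \<delta> * mon \<gamma> + sig j c' * (x j * mon \<gamma>) + x j * m"
      unfolding \<delta>_def by (simp add: algebra_simps)
    also have "\<dots> = \<delta> * mon \<gamma> + (sig j c' * c'') * mon (vadd \<alpha> \<beta>) + sig j c' * m2 + x j * m"
      unfolding m2_def by (simp add: algebra_simps)
    finally have eq: "mon \<alpha> * mon \<beta> - (sig j c' * c'') * mon (vadd \<alpha> \<beta>) = \<delta> * mon \<gamma> + sig j c' * m2 + x j * m"
      by simp
    have "\<delta> * mon \<gamma> \<in> Lt (deg \<alpha> + deg \<beta>)" using mon_Lt[OF gE _ \<delta>] dg d(5) by simp
    moreover have "sig j c' * m2 \<in> Lt (deg \<alpha> + deg \<beta>)" by (rule Lt_lmult[OF sig_R[OF d(1) c'(1)] m2])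
    moreover have "x j * m \<in> Lt (deg \<alpha> + deg \<beta>)" using xLt[OF d(1) m] d(5) by simp
    ultimately have "mon \<alpha> * mon \<beta> - (sig j c' * c'') * mon (vadd \<alpha> \<beta>) \<in> Lt (deg \<alpha> + deg \<beta>)"
      unfolding eq by (intro Lt_add)
    moreover have "sig j c' * c'' \<in> R" by (rule Rmult[OF sig_R[OF d(1) c'(1)] c''(1)])
    moreover have "sig j c' * c'' \<noteq> 0"
      by (rule Rdom[OF sig_R[OF d(1) c'(1)] c''(1) sig_nz[OF d(1) c'(1,2)] c''(2)])
    ultimately show ?thesis by blast
  qed
qed

end

lemma digits_bound: "(\<forall>i<m. \<gamma> i < (K::nat)) \<Longrightarrow> (\<Sum>i<m. \<gamma> i * K^i) < K^m"
proof (induction m)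
  case 0 thus ?case by simp
next
  case (Suc m)
  have IH: "(\<Sum>i<m. \<gamma> i * K^i) < K^m" using Suc.prems by (intro Suc.IH) auto
  have gm: "Suc (\<gamma> m) \<le> K" using Suc.prems by auto
  have s: "(\<Sum>i<Suc m. \<gamma> i * K^i) = (\<Sum>i<m. \<gamma> i * K^i) + \<gamma> m * K^m"
    by (simp only: sum.lessThan_Suc)
  have "Suc (\<gamma> m) * K^m \<le> K * K^m" using gm by (rule mult_right_mono) simp
  hence "\<gamma> m * K^m + K^m \<le> K^Suc m" by simp
  thus ?case unfolding s using IH by linarith
qed

lemma digits_inj: "(\<forall>i<m. \<gamma> i < (K::nat)) \<Longrightarrow> (\<forall>i<m. \<delta> i < K) \<Longrightarrow>
   (\<Sum>i<m. \<gamma> i * K^i) = (\<Sum>i<m. \<delta> i * K^i) \<Longrightarrow> \<forall>i<m. \<gamma> i = \<delta> i"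
proof (induction m)
  case 0 thus ?case by simp
next
  case (Suc m)
  define A where "A = (\<Sum>i<m. \<gamma> i * K^i)"
  define B where "B = (\<Sum>i<m. \<delta> i * K^i)"
  have A: "A < K^m" unfolding A_def using Suc.prems by (intro digits_bound) auto
  have B: "B < K^m" unfolding B_def using Suc.prems by (intro digits_bound) auto
  have eq: "A + \<gamma> m * K^m = B + \<delta> m * K^m" using Suc.prems(3) unfolding A_def B_def
    by (simp only: sum.lessThan_Suc)
  have K0: "K^m \<noteq> 0"
  proof
    assume "K^m = 0" thus False using A by linarith
  qed
  have "(A + \<gamma> m * K^m) div K^m = \<gamma> m"
    by (simp only: div_mult_self1[OF K0] div_less[OF A] add_0_right)
  moreover have "(B + \<delta> m * K^m) div K^m = \<delta> m"
    by (simp only: div_mult_self1[OF K0] div_less[OF B] add_0_right)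
  ultimately have gm: "\<gamma> m = \<delta> m" using eq by simp
  hence AB: "A = B" using eq by simp
  have "\<forall>i<m. \<gamma> i = \<delta> i"
    by (rule Suc.IH) (use Suc.prems AB in \<open>auto simp: A_def B_def\<close>)
  thus ?case using gm by (auto simp: less_Suc_eq)
qed

context spbw begin

definition T :: "nat \<Rightarrow> (nat \<Rightarrow> nat) set" where "T k = {\<gamma>\<in>exps n. deg \<gamma> = k}"

lemma B_Suc: "B (Suc k) = B k \<union> T k" "B k \<inter> T k = {}"
  unfolding B_def T_def by auto

lemma finT: "finite (T k)"
proof -
  have "T k \<subseteq> B (Suc k)" using B_Suc(1) by blast
  thus ?thesis by (rule finite_subset) (rule finB)
qed

lemma T_Lt: "(\<And>\<gamma>. \<gamma> \<in> T k \<Longrightarrow> f \<gamma> \<in> R) \<Longrightarrow> (\<Sum>\<gamma>\<in>T k. f \<gamma> * mon \<gamma>) \<in> Lt (Suc k)"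
  by (intro Lt_sum finT) (auto simp: T_def intro: mon_Lt)

lemma top_decomp:
  assumes a: "a \<in> Lt (Suc k)"
  obtains f where "\<And>\<gamma>. \<gamma> \<in> T k \<Longrightarrow> f \<gamma> \<in> R" "a - (\<Sum>\<gamma>\<in>T k. f \<gamma> * mon \<gamma>) \<in> Lt k"
    "a \<notin> Lt k \<Longrightarrow> \<exists>\<gamma>\<in>T k. f \<gamma> \<noteq> 0"
proof -
  obtain c where c: "\<And>\<gamma>. \<gamma> \<in> B (Suc k) \<Longrightarrow> c \<gamma> \<in> R" "a = (\<Sum>\<gamma>\<in>B (Suc k). c \<gamma> * mon \<gamma>)"
    using a by (metis LtE)
  have split: "a = (\<Sum>\<gamma>\<in>B k. c \<gamma> * mon \<gamma>) + (\<Sum>\<gamma>\<in>T k. c \<gamma> * mon \<gamma>)"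
    unfolding c(2) B_Suc(1) by (rule sum.union_disjoint[OF finB finT B_Suc(2)])
  have cR: "\<And>\<gamma>. \<gamma> \<in> T k \<Longrightarrow> c \<gamma> \<in> R" "\<And>\<gamma>. \<gamma> \<in> B k \<Longrightarrow> c \<gamma> \<in> R" using c(1) B_Suc(1) by auto
  have low: "a - (\<Sum>\<gamma>\<in>T k. c \<gamma> * mon \<gamma>) \<in> Lt k" using split LtI[of k c] cR by simp
  have nz: "\<exists>\<gamma>\<in>T k. c \<gamma> \<noteq> 0" if "a \<notin> Lt k"
  proof (rule ccontr)
    assume "\<not> (\<exists>\<gamma>\<in>T k. c \<gamma> \<noteq> 0)"
    hence "(\<Sum>\<gamma>\<in>T k. c \<gamma> * mon \<gamma>) = 0" by simp
    thus False using low that by simp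
  qed
  show ?thesis by (rule that[of c]) (use cR low nz in auto)
qed

lemma top_zero:
  assumes f: "\<And>\<gamma>. \<gamma> \<in> T k \<Longrightarrow> f \<gamma> \<in> R" and L: "(\<Sum>\<gamma>\<in>T k. f \<gamma> * mon \<gamma>) \<in> Lt k"
    and g0: "\<gamma>0 \<in> T k"
  shows "f \<gamma>0 = 0"
proof -
  obtain g where g: "\<And>\<gamma>. \<gamma> \<in> B k \<Longrightarrow> g \<gamma> \<in> R" "(\<Sum>\<gamma>\<in>T k. f \<gamma> * mon \<gamma>) = (\<Sum>\<gamma>\<in>B k. g \<gamma> * mon \<gamma>)"
    using L by (metis LtE)
  define F where "F \<gamma> = (if \<gamma> \<in> T k then f \<gamma> else 0)" for \<gamma>
  define G where "G \<gamma> = (if \<gamma> \<in> B k then g \<gamma> else 0)" for \<gamma>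
  have "(\<Sum>\<gamma>\<in>B (Suc k). F \<gamma> * mon \<gamma>) = (\<Sum>\<gamma>\<in>T k. f \<gamma> * mon \<gamma>)"
    unfolding F_def by (rule sum.mono_neutral_cong_right) (use finB finT B_Suc in auto)
  moreover have "(\<Sum>\<gamma>\<in>B (Suc k). G \<gamma> * mon \<gamma>) = (\<Sum>\<gamma>\<in>B k. g \<gamma> * mon \<gamma>)"
    unfolding G_def by (rule sum.mono_neutral_cong_right) (use finB finT B_Suc in auto)
  ultimately have "(\<Sum>\<gamma>\<in>B (Suc k). F \<gamma> * mon \<gamma>) = (\<Sum>\<gamma>\<in>B (Suc k). G \<gamma> * mon \<gamma>)" using g(2) by simp
  moreover have "F \<gamma> \<in> R" "G \<gamma> \<in> R" for \<gamma> unfolding F_def G_def using f g(1) R0 by auto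
  moreover have "\<gamma>0 \<in> B (Suc k)" using g0 B_Suc by auto
  ultimately have "F \<gamma>0 = G \<gamma>0" by (intro Lt_unique[of "Suc k" F G]) auto
  moreover have "\<gamma>0 \<notin> B k" using g0 B_Suc by auto
  ultimately show ?thesis using g0 unfolding F_def G_def by simp
qed

lemma exact_deg: "a \<noteq> 0 \<Longrightarrow> \<exists>d. a \<in> Lt (Suc d) \<and> a \<notin> Lt d"
proof -
  assume a: "a \<noteq> 0"
  obtain k where k: "a \<in> Lt k" using in_some_Lt by blast
  define d0 where "d0 = (LEAST k. a \<in> Lt k)"
  have 1: "a \<in> Lt d0" unfolding d0_def using k by (rule LeastI[where P="\<lambda>k. a \<in> Lt k"])
  have "d0 \<noteq> 0"
  proof
    assume "d0 = 0" hence "a = 0" using 1 Lt0_zero by simp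
    thus False using a by simp
  qed
  then obtain d where d: "d0 = Suc d" using not0_implies_Suc by blast
  have "a \<notin> Lt d" using not_less_Least[of d "\<lambda>k. a \<in> Lt k"] d unfolding d0_def by simp
  thus ?thesis using 1 d by blast
qed

lemma T_le: "\<gamma> \<in> T d \<Longrightarrow> i < n \<Longrightarrow> \<gamma> i \<le> d"
  unfolding T_def deg_def by (auto intro: member_le_sum)

definition w :: "nat \<Rightarrow> (nat \<Rightarrow> nat) \<Rightarrow> nat" where "w K \<gamma> = (\<Sum>i<n. \<gamma> i * K^i)"

lemma w_add: "w K (vadd \<alpha> \<beta>) = w K \<alpha> + w K \<beta>"
  unfolding w_def vadd_def by (simp add: sum.distrib add_mult_distrib)

lemma w_inj: "\<alpha> \<in> T d \<Longrightarrow> \<beta> \<in> T d \<Longrightarrow> d < K \<Longrightarrow> w K \<alpha> = w K \<beta> \<Longrightarrow> \<alpha> = \<beta>"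
proof -
  assume a: "\<alpha> \<in> T d" and b: "\<beta> \<in> T d" and K: "d < K" and e: "w K \<alpha> = w K \<beta>"
  have "\<forall>i<n. \<alpha> i = \<beta> i"
  proof (rule digits_inj[of n \<alpha> K \<beta>])
    show "\<forall>i<n. \<alpha> i < K" using T_le[OF a] K by (auto intro: le_less_trans)
    show "\<forall>i<n. \<beta> i < K" using T_le[OF b] K by (auto intro: le_less_trans)
    show "(\<Sum>i<n. \<alpha> i * K ^ i) = (\<Sum>i<n. \<beta> i * K ^ i)" using e unfolding w_def .
  qed
  moreover have "\<forall>i. i \<ge> n \<longrightarrow> \<alpha> i = 0 \<and> \<beta> i = 0" using a b unfolding T_def exps_def by auto
  ultimately show ?thesis
  proof (intro ext)
    fix i assume "\<forall>i<n. \<alpha> i = \<beta> i" "\<forall>i. i \<ge> n \<longrightarrow> \<alpha> i = 0 \<and> \<beta> i = 0"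
    thus "\<alpha> i = \<beta> i" by (cases "i < n") auto
  qed
qed

end

context spbw begin

definition tf :: "(nat \<Rightarrow> nat) \<Rightarrow> 'a \<Rightarrow> 'a" where
  "tf \<alpha> = (SOME \<tau>. bij_betw \<tau> R R \<and> \<tau> 0 = 0 \<and> (\<forall>s\<in>R. mon \<alpha> * s - \<tau> s * mon \<alpha> \<in> Lt (deg \<alpha>)))"

lemma tf: "\<alpha> \<in> exps n \<Longrightarrow> bij_betw (tf \<alpha>) R R \<and> tf \<alpha> 0 = 0 \<and> (\<forall>s\<in>R. mon \<alpha> * s - tf \<alpha> s * mon \<alpha> \<in> Lt (deg \<alpha>))"
proof -
  assume a: "\<alpha> \<in> exps n"
  have "\<exists>\<tau>. bij_betw \<tau> R R \<and> \<tau> 0 = 0 \<and> (\<forall>s\<in>R. mon \<alpha> * s - \<tau> s * mon \<alpha> \<in> Lt (deg \<alpha>))"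
    by (rule tau[OF a])
  thus ?thesis unfolding tf_def by (rule someI_ex)
qed

lemma tf_R: "\<alpha> \<in> exps n \<Longrightarrow> s \<in> R \<Longrightarrow> tf \<alpha> s \<in> R" using tf bij_betwE by blast

lemma tf_nz: "\<alpha> \<in> exps n \<Longrightarrow> s \<in> R \<Longrightarrow> s \<noteq> 0 \<Longrightarrow> tf \<alpha> s \<noteq> 0"
proof
  assume a: "\<alpha> \<in> exps n" and s: "s \<in> R" "s \<noteq> 0" and z: "tf \<alpha> s = 0"
  have "inj_on (tf \<alpha>) R" using tf[OF a] bij_betw_imp_inj_on by blast
  moreover have "tf \<alpha> s = tf \<alpha> 0" using z tf[OF a] by simp
  ultimately have "s = 0" using s R0 by (auto dest: inj_onD)
  thus False using s by simp
qed

definition cf :: "(nat \<Rightarrow> nat) \<Rightarrow> (nat \<Rightarrow> nat) \<Rightarrow> 'a" where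
  "cf \<alpha> \<beta> = (SOME c. c \<in> R \<and> c \<noteq> 0 \<and> mon \<alpha> * mon \<beta> - c * mon (vadd \<alpha> \<beta>) \<in> Lt (deg \<alpha> + deg \<beta>))"

lemma cf: "\<alpha> \<in> exps n \<Longrightarrow> \<beta> \<in> exps n \<Longrightarrow>
   cf \<alpha> \<beta> \<in> R \<and> cf \<alpha> \<beta> \<noteq> 0 \<and> mon \<alpha> * mon \<beta> - cf \<alpha> \<beta> * mon (vadd \<alpha> \<beta>) \<in> Lt (deg \<alpha> + deg \<beta>)"
proof -
  assume "\<alpha> \<in> exps n" "\<beta> \<in> exps n"
  hence "\<exists>c. c \<in> R \<and> c \<noteq> 0 \<and> mon \<alpha> * mon \<beta> - c * mon (vadd \<alpha> \<beta>) \<in> Lt (deg \<alpha> + deg \<beta>)"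
    using lead by blast
  thus ?thesis unfolding cf_def by (rule someI_ex)
qed

lemma term_lead:
  assumes a: "\<alpha> \<in> T d" and b: "\<beta> \<in> T e" and s: "s \<in> R" and r: "r \<in> R"
  shows "r * (mon \<alpha> * (s * mon \<beta>)) - (r * (tf \<alpha> s * cf \<alpha> \<beta>)) * mon (vadd \<alpha> \<beta>) \<in> Lt (d + e)"
proof -
  have aE: "\<alpha> \<in> exps n" "deg \<alpha> = d" and bE: "\<beta> \<in> exps n" "deg \<beta> = e" using a b unfolding T_def by auto
  define m1 where "m1 = mon \<alpha> * s - tf \<alpha> s * mon \<alpha>"
  have m1: "m1 \<in> Lt d" unfolding m1_def using tf[OF aE(1)] s aE(2) by blast
  define m2 where "m2 = mon \<alpha> * mon \<beta> - cf \<alpha> \<beta> * mon (vadd \<alpha> \<beta>)"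
  have m2: "m2 \<in> Lt (d + e)" unfolding m2_def using cf[OF aE(1) bE(1)] aE(2) bE(2) by blast
  have mb: "mon \<beta> \<in> Lt (Suc e)" using mon_Lt1[OF bE(1)] bE(2) by simp
  have "m1 * mon \<beta> \<in> Lt (d + Suc e - 1)" by (rule Lt_mult[OF m1 mb])
  hence m3: "m1 * mon \<beta> \<in> Lt (d + e)" by simp
  have "mon \<alpha> * (s * mon \<beta>) = (tf \<alpha> s * mon \<alpha> + m1) * mon \<beta>" unfolding m1_def by (simp add: mult.assoc)
  also have "\<dots> = tf \<alpha> s * (cf \<alpha> \<beta> * mon (vadd \<alpha> \<beta>) + m2) + m1 * mon \<beta>"
    unfolding m2_def by (simp add: algebra_simps)
  finally have eq: "r * (mon \<alpha> * (s * mon \<beta>)) - (r * (tf \<alpha> s * cf \<alpha> \<beta>)) * mon (vadd \<alpha> \<beta>) =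
      r * (tf \<alpha> s * m2) + r * (m1 * mon \<beta>)"
    by (simp add: algebra_simps)
  show ?thesis unfolding eq
    by (intro Lt_add Lt_lmult[OF r] Lt_lmult[OF tf_R[OF aE(1) s]] m2 m3)
qed

lemma domainA: fixes a b :: 'a shows "a \<noteq> 0 \<Longrightarrow> b \<noteq> 0 \<Longrightarrow> a * b \<noteq> 0"
proof
  assume a0: "a \<noteq> 0" and b0: "b \<noteq> 0" and ab: "a * b = 0"
  obtain d where da: "a \<in> Lt (Suc d)" "a \<notin> Lt d" using exact_deg[OF a0] by blast
  obtain e where db: "b \<in> Lt (Suc e)" "b \<notin> Lt e" using exact_deg[OF b0] by blast
  obtain f where f: "\<And>\<gamma>. \<gamma> \<in> T d \<Longrightarrow> f \<gamma> \<in> R" "a - (\<Sum>\<gamma>\<in>T d. f \<gamma> * mon \<gamma>) \<in> Lt d"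
      "\<exists>\<gamma>\<in>T d. f \<gamma> \<noteq> 0"
    using top_decomp[OF da(1)] da(2) by metis
  obtain g where g: "\<And>\<gamma>. \<gamma> \<in> T e \<Longrightarrow> g \<gamma> \<in> R" "b - (\<Sum>\<gamma>\<in>T e. g \<gamma> * mon \<gamma>) \<in> Lt e"
      "\<exists>\<gamma>\<in>T e. g \<gamma> \<noteq> 0"
    using top_decomp[OF db(1)] db(2) by metis
  define A0 where "A0 = (\<Sum>\<gamma>\<in>T d. f \<gamma> * mon \<gamma>)"
  define B0 where "B0 = (\<Sum>\<gamma>\<in>T e. g \<gamma> * mon \<gamma>)"
  have A0: "A0 \<in> Lt (Suc d)" unfolding A0_def using f(1) by (rule T_Lt)
  define P where "P = T d \<times> T e"
  have finP: "finite P" unfolding P_def using finT by simp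
  define h where "h p = f (fst p) * (tf (fst p) (g (snd p)) * cf (fst p) (snd p))" for p
  define vp where "vp p = vadd (fst p) (snd p)" for p
  have PE: "fst p \<in> exps n" "snd p \<in> exps n" "fst p \<in> T d" "snd p \<in> T e" if "p \<in> P" for p
    using that unfolding P_def T_def by auto
  have hR: "h p \<in> R" if "p \<in> P" for p
    unfolding h_def using PE[OF that] f(1) g(1)
    by (intro Rmult tf_R cf[THEN conjunct1]) auto
  have "A0 * B0 = (\<Sum>\<alpha>\<in>T d. \<Sum>\<beta>\<in>T e. (f \<alpha> * mon \<alpha>) * (g \<beta> * mon \<beta>))"
    unfolding A0_def B0_def by (rule sum_product)
  also have "\<dots> = (\<Sum>p\<in>P. f (fst p) * (mon (fst p) * (g (snd p) * mon (snd p))))"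
    unfolding P_def sum.cartesian_product by (simp add: mult.assoc case_prod_beta)
  finally have AB: "A0 * B0 = (\<Sum>p\<in>P. f (fst p) * (mon (fst p) * (g (snd p) * mon (snd p))))" .
  define S where "S = (\<Sum>p\<in>P. h p * mon (vp p))"
  have "A0 * B0 - S = (\<Sum>p\<in>P. f (fst p) * (mon (fst p) * (g (snd p) * mon (snd p))) - h p * mon (vp p))"
    unfolding AB S_def by (simp add: sum_subtractf)
  also have "\<dots> \<in> Lt (d + e)"
  proof (rule Lt_sum[OF finP])
    fix p assume p: "p \<in> P"
    show "f (fst p) * (mon (fst p) * (g (snd p) * mon (snd p))) - h p * mon (vp p) \<in> Lt (d + e)"
      unfolding h_def vp_def
      by (rule term_lead[OF PE(3,4)[OF p] g(1)[OF PE(4)[OF p]] f(1)[OF PE(3)[OF p]]])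
  qed
  finally have L1: "A0 * B0 - S \<in> Lt (d + e)" .
  have L2: "A0 * (b - B0) \<in> Lt (d + e)" using Lt_mult[OF A0 g(2)[folded B0_def]] by simp
  have L3: "(a - A0) * b \<in> Lt (d + e)" using Lt_mult[OF f(2)[folded A0_def] db(1)] by simp
  have eqS: "S = - ((A0 * B0 - S) + A0 * (b - B0) + (a - A0) * b)" using ab by (simp add: algebra_simps)
  have SL: "S \<in> Lt (d + e)" by (subst eqS) (intro Lt_neg Lt_add L1 L2 L3)
  have vpT: "vp ` P \<subseteq> T (d + e)"
  proof
    fix \<gamma> assume "\<gamma> \<in> vp ` P"
    then obtain p where p: "p \<in> P" "\<gamma> = vp p" by blast
    show "\<gamma> \<in> T (d + e)" using PE[OF p(1)] unfolding p(2) vp_def T_def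
      by (auto simp: deg_vadd intro: exps_vadd)
  qed
  define F where "F \<gamma> = (\<Sum>p\<in>{p\<in>P. vp p = \<gamma>}. h p)" for \<gamma>
  have FR: "F \<gamma> \<in> R" for \<gamma> unfolding F_def using finP hR by (intro Rsum) auto
  have "S = (\<Sum>\<gamma>\<in>T (d + e). \<Sum>p\<in>{p\<in>P. vp p = \<gamma>}. h p * mon (vp p))"
    unfolding S_def by (rule sum.group[OF finP finT vpT, symmetric])
  also have "\<dots> = (\<Sum>\<gamma>\<in>T (d + e). \<Sum>p\<in>{p\<in>P. vp p = \<gamma>}. h p * mon \<gamma>)"
    by (intro sum.cong refl) auto
  also have "\<dots> = (\<Sum>\<gamma>\<in>T (d + e). F \<gamma> * mon \<gamma>)"
    unfolding F_def by (simp add: sum_distrib_right)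
  finally have SF: "S = (\<Sum>\<gamma>\<in>T (d + e). F \<gamma> * mon \<gamma>)" .
  have F0: "F \<gamma> = 0" if "\<gamma> \<in> T (d + e)" for \<gamma>
    using top_zero[of "d + e" F \<gamma>] FR SL SF that by simp
  define K where "K = Suc (d + e)"
  define Sa where "Sa = {\<alpha>\<in>T d. f \<alpha> \<noteq> 0}"
  define Sb where "Sb = {\<beta>\<in>T e. g \<beta> \<noteq> 0}"
  have finSa: "finite Sa" unfolding Sa_def using finT by simp
  have finSb: "finite Sb" unfolding Sb_def using finT by simp
  have neSa: "Sa \<noteq> {}" unfolding Sa_def using f(3) by blast
  have neSb: "Sb \<noteq> {}" unfolding Sb_def using g(3) by blast
  have "Max (w K ` Sa) \<in> w K ` Sa" using finSa neSa by (intro Max_in) auto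
  then obtain as where as: "as \<in> Sa" "w K as = Max (w K ` Sa)" by auto
  have amax: "w K \<alpha> \<le> w K as" if "\<alpha> \<in> Sa" for \<alpha> unfolding as(2) using finSa that by (intro Max_ge) auto
  have "Max (w K ` Sb) \<in> w K ` Sb" using finSb neSb by (intro Max_in) auto
  then obtain bs where bs: "bs \<in> Sb" "w K bs = Max (w K ` Sb)" by auto
  have bmax: "w K \<beta> \<le> w K bs" if "\<beta> \<in> Sb" for \<beta> unfolding bs(2) using finSb that by (intro Max_ge) auto
  have asT: "as \<in> T d" "f as \<noteq> 0" using as(1) unfolding Sa_def by auto
  have bsT: "bs \<in> T e" "g bs \<noteq> 0" using bs(1) unfolding Sb_def by auto
  define ps where "ps = (as, bs)"
  have psP: "ps \<in> P" unfolding ps_def P_def using asT bsT by simp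
  have uniq: "h p = 0" if p: "p \<in> P" "vp p = vp ps" "p \<noteq> ps" for p
  proof (rule ccontr)
    assume hp: "h p \<noteq> 0"
    have fa: "f (fst p) \<noteq> 0" using hp unfolding h_def by auto
    have gb: "g (snd p) \<noteq> 0"
    proof
      assume "g (snd p) = 0"
      hence "tf (fst p) (g (snd p)) = 0" using tf[OF PE(1)[OF p(1)]] by simp
      thus False using hp unfolding h_def by simp
    qed
    have aS: "fst p \<in> Sa" using fa PE(3)[OF p(1)] unfolding Sa_def by simp
    have bS: "snd p \<in> Sb" using gb PE(4)[OF p(1)] unfolding Sb_def by simp
    have "w K (fst p) + w K (snd p) = w K as + w K bs"
      using p(2) unfolding vp_def ps_def by (simp add: w_add[symmetric])
    moreover have "w K (fst p) \<le> w K as" by (rule amax[OF aS])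
    moreover have "w K (snd p) \<le> w K bs" by (rule bmax[OF bS])
    ultimately have wa: "w K (fst p) = w K as" and wb: "w K (snd p) = w K bs" by linarith+
    have "fst p = as" by (rule w_inj[OF PE(3)[OF p(1)] asT(1) _ wa]) (simp add: K_def)
    moreover have "snd p = bs" by (rule w_inj[OF PE(4)[OF p(1)] bsT(1) _ wb]) (simp add: K_def)
    ultimately have "fst p = as" "snd p = bs" by blast+
    hence "p = ps" unfolding ps_def by (simp add: prod_eq_iff)
    thus False using p(3) by simp
  qed
  have "F (vp ps) = (\<Sum>p\<in>{p\<in>P. vp p = vp ps}. if p = ps then h p else 0)"
    unfolding F_def by (intro sum.cong refl) (use uniq in auto)
  also have "\<dots> = h ps" using finP psP by (simp add: sum.delta)
  finally have Fps: "F (vp ps) = h ps" .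
  have "vp ps \<in> T (d + e)" using vpT psP by blast
  hence "h ps = 0" using F0 Fps by simp
  moreover have "h ps \<noteq> 0"
  proof -
    have aE: "as \<in> exps n" and bE: "bs \<in> exps n" using asT bsT unfolding T_def by auto
    have t: "tf as (g bs) \<in> R" "tf as (g bs) \<noteq> 0"
      using tf_R[OF aE g(1)[OF bsT(1)]] tf_nz[OF aE g(1)[OF bsT(1)] bsT(2)] by auto
    have c: "cf as bs \<in> R" "cf as bs \<noteq> 0" using cf[OF aE bE] by auto
    have "tf as (g bs) * cf as bs \<noteq> 0" by (rule Rdom[OF t(1) c(1) t(2) c(2)])
    moreover have "tf as (g bs) * cf as bs \<in> R" by (rule Rmult[OF t(1) c(1)])
    ultimately show ?thesis unfolding h_def ps_def using Rdom f(1)[OF asT(1)] asT(2) by simp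
  qed
  ultimately show False by simp
qed
end

lemma lin_exp: "\<exists>s. A * s + B \<le> (2::nat) ^ s"
proof -
  define k where "k = 2 * A + B + 1"
  have k1: "k + 1 \<le> 2 ^ k" using less_exp[of k] by (simp add: Suc_le_eq)
  have "(k + 1) * (k + 1) \<le> 2 ^ k * 2 ^ k" using k1 by (intro mult_mono) auto
  also have "\<dots> = 2 ^ (2 * k)" by (simp add: power_add[symmetric] mult_2)
  finally have a: "(k + 1) * (k + 1) \<le> 2 ^ (2 * k)" .
  have "2 * A * k \<le> k * k" unfolding k_def by (intro mult_right_mono) auto
  hence "A * (2 * k) + B \<le> (k + 1) * (k + 1)" unfolding k_def by (simp add: algebra_simps)
  thus ?thesis using a by (intro exI[of _ "2 * k"]) linarith
qed

lemma exp_beats: "\<exists>t. (t * c + 1) ^ n < (2::nat) ^ t"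
proof -
  define C where "C = (c + 1) ^ n"
  obtain s where s: "s * n + C \<le> (2::nat) ^ s" using lin_exp[of n C] by (auto simp: mult.commute)
  define t where "t = (2::nat) ^ s"
  have t1: "1 \<le> t" unfolding t_def by simp
  have "t * c + 1 \<le> t * (c + 1)" using t1 by (simp add: algebra_simps)
  hence "(t * c + 1) ^ n \<le> (t * (c + 1)) ^ n" by (rule power_mono) simp
  also have "\<dots> = t ^ n * C" unfolding C_def by (rule power_mult_distrib)
  also have "\<dots> = 2 ^ (s * n) * C" unfolding t_def by (simp add: power_mult)
  also have "\<dots> < 2 ^ (s * n) * 2 ^ C" using less_exp[of C] by simp
  also have "\<dots> = 2 ^ (s * n + C)" by (simp add: power_add)
  also have "\<dots> \<le> 2 ^ t" unfolding t_def using s by (intro power_increasing) auto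
  finally show ?thesis by blast
qed

lemma doubling:
  fixes f :: "nat \<Rightarrow> nat"
  assumes bnd: "\<And>D. f D \<le> (D + 1) ^ n" and f0: "1 \<le> f 0"
  shows "\<exists>D. f (D + c) < 2 * f D"
proof (rule ccontr)
  assume "\<not> ?thesis"
  hence H: "2 * f D \<le> f (D + c)" for D by (simp add: not_less)
  have I: "2 ^ i \<le> f (i * c)" for i
  proof (induction i)
    case 0 thus ?case using f0 by simp
  next
    case (Suc i)
    have "2 ^ Suc i \<le> 2 * f (i * c)" using Suc by simp
    also have "\<dots> \<le> f (i * c + c)" by (rule H)
    finally show ?case by (simp add: add.commute)
  qed
  obtain t where t: "(t * c + 1) ^ n < (2::nat) ^ t" using exp_beats by blast
  have "2 ^ t \<le> f (t * c)" by (rule I)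
  also have "\<dots> \<le> (t * c + 1) ^ n" by (rule bnd)
  finally show False using t by simp
qed

context spbw begin

lemma R_pow: "a \<in> R \<Longrightarrow> a ^ k \<in> R"
  by (induction k) (auto intro: R1 Rmult)

lemma R_left_ore:
  assumes noeth: "left_noetherian_on R" and a: "a \<in> R" and b: "b \<in> R" "b \<noteq> 0"
  shows "\<exists>p\<in>R. \<exists>q\<in>R. p \<noteq> 0 \<and> p * a = q * b"
proof (rule ccontr)
  assume no: "\<not> ?thesis"
  have disj: "u = 0" if "u \<in> R" "r \<in> R" "u * a = r * b" for u r
  proof (rule ccontr)
    assume "u \<noteq> 0"
    hence "\<exists>p\<in>R. \<exists>q\<in>R. p \<noteq> 0 \<and> p * a = q * b" using that by blast
    thus False using no by simp
  qed
  define I where "I k = {u. \<exists>r. (\<forall>j<k. r j \<in> R) \<and> u = (\<Sum>j<k. r j * b * a ^ j)}" for k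
  have Imem: "u \<in> I k \<longleftrightarrow> (\<exists>r. (\<forall>j<k. r j \<in> R) \<and> u = (\<Sum>j<k. r j * b * a ^ j))" for u k
    unfolding I_def by simp
  have sumR: "(\<Sum>j<k. r j * b * a ^ j) \<in> R" if "\<forall>j<k. r j \<in> R" for r k
  proof (rule Rsum)
    fix j assume "j \<in> {..<k}"
    hence "r j \<in> R" using that by simp
    thus "r j * b * a ^ j \<in> R" by (intro Rmult R_pow a b(1))
  qed simp
  have ideal: "left_ideal_of R (I k)" for k
    unfolding left_ideal_of_def
  proof (intro conjI ballI)
    show "I k \<subseteq> R"
    proof
      fix u assume "u \<in> I k"
      then obtain r where u: "(\<forall>j<k. r j \<in> R) \<and> u = (\<Sum>j<k. r j * b * a ^ j)" unfolding Imem ..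
      show "u \<in> R" using sumR[OF conjunct1[OF u]] conjunct2[OF u] by simp
    qed
    have "(\<forall>j<k. (0::'a) \<in> R) \<and> (0::'a) = (\<Sum>j<k. 0 * b * a ^ j)" using R0 by simp
    thus "0 \<in> I k" unfolding Imem by (rule exI[where x="\<lambda>_. 0"])
    fix u v assume uI: "u \<in> I k" and vI: "v \<in> I k"
    from uI obtain r where u: "(\<forall>j<k. r j \<in> R) \<and> u = (\<Sum>j<k. r j * b * a ^ j)" unfolding Imem ..
    from vI obtain s where v: "(\<forall>j<k. s j \<in> R) \<and> v = (\<Sum>j<k. s j * b * a ^ j)" unfolding Imem ..
    have "u + v = (\<Sum>j<k. (r j + s j) * b * a ^ j)"
      using conjunct2[OF u] conjunct2[OF v] by (simp add: sum.distrib distrib_right)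
    moreover have "\<forall>j<k. r j + s j \<in> R" using conjunct1[OF u] conjunct1[OF v] Radd by blast
    ultimately have "(\<forall>j<k. r j + s j \<in> R) \<and> u + v = (\<Sum>j<k. (r j + s j) * b * a ^ j)" by blast
    thus "u + v \<in> I k" unfolding Imem by (rule exI[where x="\<lambda>j. r j + s j"])
  next
    fix t u assume t: "t \<in> R" and uI: "u \<in> I k"
    from uI obtain r where u: "(\<forall>j<k. r j \<in> R) \<and> u = (\<Sum>j<k. r j * b * a ^ j)" unfolding Imem ..
    have "t * u = (\<Sum>j<k. (t * r j) * b * a ^ j)"
      using conjunct2[OF u] by (simp add: sum_distrib_left mult.assoc)
    moreover have "\<forall>j<k. t * r j \<in> R" using conjunct1[OF u] t Rmult by blast
    ultimately have "(\<forall>j<k. t * r j \<in> R) \<and> t * u = (\<Sum>j<k. (t * r j) * b * a ^ j)" by blast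
    thus "t * u \<in> I k" unfolding Imem by (rule exI[where x="\<lambda>j. t * r j"])
  qed
  have chain: "I k \<subseteq> I (Suc k)" for k
  proof
    fix u assume "u \<in> I k"
    then obtain r where u: "(\<forall>j<k. r j \<in> R) \<and> u = (\<Sum>j<k. r j * b * a ^ j)" unfolding Imem ..
    define r' where "r' j = (if j < k then r j else 0)" for j
    have "u = (\<Sum>j<Suc k. r' j * b * a ^ j)" using conjunct2[OF u] unfolding r'_def by simp
    moreover have "\<forall>j<Suc k. r' j \<in> R" unfolding r'_def using conjunct1[OF u] R0 by auto
    ultimately have "(\<forall>j<Suc k. r' j \<in> R) \<and> u = (\<Sum>j<Suc k. r' j * b * a ^ j)" by blast
    thus "u \<in> I (Suc k)" unfolding Imem by (rule exI[where x=r'])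
  qed
  have "\<forall>I :: nat \<Rightarrow> 'a set. (\<forall>k. left_ideal_of R (I k)) \<and> (\<forall>k. I k \<subseteq> I (Suc k)) \<longrightarrow> (\<exists>m. \<forall>k\<ge>m. I k = I m)"
    using noeth unfolding left_noetherian_on_def .
  hence "(\<forall>k. left_ideal_of R (I k)) \<and> (\<forall>k. I k \<subseteq> I (Suc k)) \<longrightarrow> (\<exists>m. \<forall>k\<ge>m. I k = I m)"
    by (rule spec)
  hence "\<exists>m. \<forall>k\<ge>m. I k = I m" using ideal chain by blast
  then obtain m where m: "\<forall>k\<ge>m. I k = I m" by blast
  have key: "\<forall>r. (\<forall>j<k. r j \<in> R) \<longrightarrow> b * a ^ k \<noteq> (\<Sum>j<k. r j * b * a ^ j)" for k
  proof (induction k)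
    case 0 thus ?case using b by simp
  next
    case (Suc k)
    show ?case
    proof (intro allI impI notI)
      fix r assume r: "\<forall>j<Suc k. r j \<in> R" and eq: "b * a ^ Suc k = (\<Sum>j<Suc k. r j * b * a ^ j)"
      define u where "u = b * a ^ k - (\<Sum>j<k. r (Suc j) * b * a ^ j)"
      have rs: "\<forall>j<k. r (Suc j) \<in> R" using r by simp
      have uR: "u \<in> R" unfolding u_def by (intro Rdiff sumR[OF rs] Rmult b(1) R_pow a)
      have "(\<Sum>j<Suc k. r j * b * a ^ j) = r 0 * b + (\<Sum>j<k. r (Suc j) * b * a ^ (Suc j))"
        by (simp only: sum.lessThan_Suc_shift power_0 mult_1_right)
      also have "(\<Sum>j<k. r (Suc j) * b * a ^ (Suc j)) = (\<Sum>j<k. r (Suc j) * b * a ^ j) * a"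
        by (simp add: sum_distrib_right mult.assoc power_commutes)
      finally have e2: "(\<Sum>j<Suc k. r j * b * a ^ j) = r 0 * b + (\<Sum>j<k. r (Suc j) * b * a ^ j) * a" .
      have "u * a = b * a ^ Suc k - (\<Sum>j<k. r (Suc j) * b * a ^ j) * a"
        unfolding u_def by (simp add: left_diff_distrib mult.assoc power_commutes)
      also have "\<dots> = r 0 * b" unfolding eq e2 by simp
      finally have "u * a = r 0 * b" .
      hence "u = 0" using disj[OF uR] r by auto
      hence "b * a ^ k = (\<Sum>j<k. r (Suc j) * b * a ^ j)" unfolding u_def by simp
      moreover have "b * a ^ k \<noteq> (\<Sum>j<k. r (Suc j) * b * a ^ j)"
        using spec[OF Suc.IH, of "\<lambda>j. r (Suc j)"] rs by simp
      ultimately show False by simp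
    qed
  qed
  define e where "e j = (if j = m then 1 else (0::'a))" for j
  have "b * a ^ m = (\<Sum>j<Suc m. e j * b * a ^ j)" unfolding e_def by simp
  moreover have "\<forall>j<Suc m. e j \<in> R" unfolding e_def using R0 R1 by simp
  ultimately have "(\<forall>j<Suc m. e j \<in> R) \<and> b * a ^ m = (\<Sum>j<Suc m. e j * b * a ^ j)" by blast
  hence "b * a ^ m \<in> I (Suc m)" unfolding Imem by (rule exI[where x=e])
  moreover have "Suc m \<ge> m \<longrightarrow> I (Suc m) = I m" using m by (rule spec)
  ultimately have "b * a ^ m \<in> I m" by simp
  then obtain r where r: "(\<forall>j<m. r j \<in> R) \<and> b * a ^ m = (\<Sum>j<m. r j * b * a ^ j)" unfolding Imem ..
  have "b * a ^ m \<noteq> (\<Sum>j<m. r j * b * a ^ j)" using spec[OF key[of m], of r] conjunct1[OF r] by simp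
  thus False using conjunct2[OF r] by simp
qed

end

context spbw begin

lemma R_right_ore:
  assumes noeth: "right_noetherian_on R" and a: "a \<in> R" and b: "b \<in> R" "b \<noteq> 0"
  shows "\<exists>p\<in>R. \<exists>q\<in>R. p \<noteq> 0 \<and> a * p = b * q"
proof (rule ccontr)
  assume no: "\<not> ?thesis"
  have disj: "u = 0" if "u \<in> R" "r \<in> R" "a * u = b * r" for u r
  proof (rule ccontr)
    assume "u \<noteq> 0"
    hence "\<exists>p\<in>R. \<exists>q\<in>R. p \<noteq> 0 \<and> a * p = b * q" using that by blast
    thus False using no by simp
  qed
  define I where "I k = {u. \<exists>r. (\<forall>j<k. r j \<in> R) \<and> u = (\<Sum>j<k. a ^ j * b * r j)}" for k
  have Imem: "u \<in> I k \<longleftrightarrow> (\<exists>r. (\<forall>j<k. r j \<in> R) \<and> u = (\<Sum>j<k. a ^ j * b * r j))" for u k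
    unfolding I_def by simp
  have sumR: "(\<Sum>j<k. a ^ j * b * r j) \<in> R" if "\<forall>j<k. r j \<in> R" for r k
  proof (rule Rsum)
    fix j assume "j \<in> {..<k}"
    hence "r j \<in> R" using that by simp
    thus "a ^ j * b * r j \<in> R" by (intro Rmult R_pow a b(1))
  qed simp
  have ideal: "right_ideal_of R (I k)" for k
    unfolding right_ideal_of_def
  proof (intro conjI ballI)
    show "I k \<subseteq> R"
    proof
      fix u assume "u \<in> I k"
      then obtain r where u: "(\<forall>j<k. r j \<in> R) \<and> u = (\<Sum>j<k. a ^ j * b * r j)" unfolding Imem ..
      show "u \<in> R" using sumR[OF conjunct1[OF u]] conjunct2[OF u] by simp
    qed
    have "(\<forall>j<k. (0::'a) \<in> R) \<and> (0::'a) = (\<Sum>j<k. a ^ j * b * 0)" using R0 by simp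
    thus "0 \<in> I k" unfolding Imem by (rule exI[where x="\<lambda>_. 0"])
    fix u v assume uI: "u \<in> I k" and vI: "v \<in> I k"
    from uI obtain r where u: "(\<forall>j<k. r j \<in> R) \<and> u = (\<Sum>j<k. a ^ j * b * r j)" unfolding Imem ..
    from vI obtain s where v: "(\<forall>j<k. s j \<in> R) \<and> v = (\<Sum>j<k. a ^ j * b * s j)" unfolding Imem ..
    have "u + v = (\<Sum>j<k. a ^ j * b * (r j + s j))"
      using conjunct2[OF u] conjunct2[OF v] by (simp add: sum.distrib distrib_left)
    moreover have "\<forall>j<k. r j + s j \<in> R" using conjunct1[OF u] conjunct1[OF v] Radd by blast
    ultimately have "(\<forall>j<k. r j + s j \<in> R) \<and> u + v = (\<Sum>j<k. a ^ j * b * (r j + s j))" by blast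
    thus "u + v \<in> I k" unfolding Imem by (rule exI[where x="\<lambda>j. r j + s j"])
  next
    fix t u assume t: "t \<in> R" and uI: "u \<in> I k"
    from uI obtain r where u: "(\<forall>j<k. r j \<in> R) \<and> u = (\<Sum>j<k. a ^ j * b * r j)" unfolding Imem ..
    have "u * t = (\<Sum>j<k. a ^ j * b * (r j * t))"
      using conjunct2[OF u] by (simp add: sum_distrib_right mult.assoc)
    moreover have "\<forall>j<k. r j * t \<in> R" using conjunct1[OF u] t Rmult by blast
    ultimately have "(\<forall>j<k. r j * t \<in> R) \<and> u * t = (\<Sum>j<k. a ^ j * b * (r j * t))" by blast
    thus "u * t \<in> I k" unfolding Imem by (rule exI[where x="\<lambda>j. r j * t"])
  qed
  have chain: "I k \<subseteq> I (Suc k)" for k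
  proof
    fix u assume "u \<in> I k"
    then obtain r where u: "(\<forall>j<k. r j \<in> R) \<and> u = (\<Sum>j<k. a ^ j * b * r j)" unfolding Imem ..
    define r' where "r' j = (if j < k then r j else 0)" for j
    have "u = (\<Sum>j<Suc k. a ^ j * b * r' j)" using conjunct2[OF u] unfolding r'_def by simp
    moreover have "\<forall>j<Suc k. r' j \<in> R" unfolding r'_def using conjunct1[OF u] R0 by auto
    ultimately have "(\<forall>j<Suc k. r' j \<in> R) \<and> u = (\<Sum>j<Suc k. a ^ j * b * r' j)" by blast
    thus "u \<in> I (Suc k)" unfolding Imem by (rule exI[where x=r'])
  qed
  have "\<forall>I :: nat \<Rightarrow> 'a set. (\<forall>k. right_ideal_of R (I k)) \<and> (\<forall>k. I k \<subseteq> I (Suc k)) \<longrightarrow> (\<exists>m. \<forall>k\<ge>m. I k = I m)"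
    using noeth unfolding right_noetherian_on_def .
  hence "(\<forall>k. right_ideal_of R (I k)) \<and> (\<forall>k. I k \<subseteq> I (Suc k)) \<longrightarrow> (\<exists>m. \<forall>k\<ge>m. I k = I m)"
    by (rule spec)
  hence "\<exists>m. \<forall>k\<ge>m. I k = I m" using ideal chain by blast
  then obtain m where m: "\<forall>k\<ge>m. I k = I m" ..
  have key: "\<forall>r. (\<forall>j<k. r j \<in> R) \<longrightarrow> a ^ k * b \<noteq> (\<Sum>j<k. a ^ j * b * r j)" for k
  proof (induction k)
    case 0 thus ?case using b by simp
  next
    case (Suc k)
    show ?case
    proof (intro allI impI notI)
      fix r assume r: "\<forall>j<Suc k. r j \<in> R" and eq: "a ^ Suc k * b = (\<Sum>j<Suc k. a ^ j * b * r j)"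
      define u where "u = a ^ k * b - (\<Sum>j<k. a ^ j * b * r (Suc j))"
      have rs: "\<forall>j<k. r (Suc j) \<in> R" using r by simp
      have uR: "u \<in> R" unfolding u_def by (intro Rdiff sumR[OF rs] Rmult b(1) R_pow a)
      have "(\<Sum>j<Suc k. a ^ j * b * r j) = b * r 0 + (\<Sum>j<k. a ^ (Suc j) * b * r (Suc j))"
        by (simp only: sum.lessThan_Suc_shift power_0 mult_1_left)
      also have "(\<Sum>j<k. a ^ (Suc j) * b * r (Suc j)) = a * (\<Sum>j<k. a ^ j * b * r (Suc j))"
        by (simp add: sum_distrib_left mult.assoc)
      finally have e2: "(\<Sum>j<Suc k. a ^ j * b * r j) = b * r 0 + a * (\<Sum>j<k. a ^ j * b * r (Suc j))" .
      have "a * u = a ^ Suc k * b - a * (\<Sum>j<k. a ^ j * b * r (Suc j))"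
        unfolding u_def by (simp add: right_diff_distrib mult.assoc)
      also have "\<dots> = b * r 0" unfolding eq e2 by simp
      finally have "a * u = b * r 0" .
      hence "u = 0" using disj[OF uR] r by auto
      hence "a ^ k * b = (\<Sum>j<k. a ^ j * b * r (Suc j))" unfolding u_def by simp
      moreover have "a ^ k * b \<noteq> (\<Sum>j<k. a ^ j * b * r (Suc j))"
        using spec[OF Suc.IH, of "\<lambda>j. r (Suc j)"] rs by simp
      ultimately show False by simp
    qed
  qed
  define e where "e j = (if j = m then 1 else (0::'a))" for j
  have "a ^ m * b = (\<Sum>j<Suc m. a ^ j * b * e j)" unfolding e_def by simp
  moreover have "\<forall>j<Suc m. e j \<in> R" unfolding e_def using R0 R1 by simp
  ultimately have "(\<forall>j<Suc m. e j \<in> R) \<and> a ^ m * b = (\<Sum>j<Suc m. a ^ j * b * e j)" by blast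
  hence "a ^ m * b \<in> I (Suc m)" unfolding Imem by (rule exI[where x=e])
  moreover have "Suc m \<ge> m \<longrightarrow> I (Suc m) = I m" using m by (rule spec)
  ultimately have "a ^ m * b \<in> I m" by simp
  then obtain r where r: "(\<forall>j<m. r j \<in> R) \<and> a ^ m * b = (\<Sum>j<m. a ^ j * b * r j)" unfolding Imem ..
  have "a ^ m * b \<noteq> (\<Sum>j<m. a ^ j * b * r j)" using spec[OF key[of m], of r] conjunct1[OF r] by simp
  thus False using conjunct2[OF r] by simp
qed

lemma dep_left:
  assumes ore: "\<forall>a\<in>R. \<forall>b\<in>R. b \<noteq> 0 \<longrightarrow> (\<exists>p\<in>R. \<exists>q\<in>R. p \<noteq> 0 \<and> p * a = q * b)"
  shows "finite G \<Longrightarrow> finite J \<Longrightarrow> card G < card J \<Longrightarrow> (\<forall>j\<in>J. \<forall>g\<in>G. v j g \<in> R) \<Longrightarrow>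
    \<exists>r. (\<forall>j\<in>J. r j \<in> R) \<and> (\<exists>j\<in>J. r j \<noteq> 0) \<and> (\<forall>g\<in>G. (\<Sum>j\<in>J. r j * v j g) = 0)"
proof (induction G arbitrary: J v rule: finite_induct)
  case empty
  then obtain j0 where j0: "j0 \<in> J" by fastforce
  define r where "r j = (if j = j0 then 1 else (0::'a))" for j
  have "\<forall>j\<in>J. r j \<in> R" unfolding r_def using R0 R1 by simp
  moreover have "r j0 \<noteq> 0" unfolding r_def using one_neq_zero by simp
  ultimately show ?case using j0 by blast
next
  case (insert g0 G)
  note finJ = insert.prems(1) and cardJ = insert.prems(2) and vR = insert.prems(3)
  have cG: "card G < card J" using cardJ insert.hyps by simp
  show ?case
  proof (cases "\<forall>j\<in>J. v j g0 = 0")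
    case True
    obtain r where r: "\<forall>j\<in>J. r j \<in> R" "\<exists>j\<in>J. r j \<noteq> 0" "\<forall>g\<in>G. (\<Sum>j\<in>J. r j * v j g) = 0"
      using insert.IH[OF finJ cG] vR by blast
    have "(\<Sum>j\<in>J. r j * v j g0) = 0" using True by simp
    thus ?thesis using r by blast
  next
    case False
    then obtain j0 where j0: "j0 \<in> J" "v j0 g0 \<noteq> 0" by blast
    define b0 where "b0 = v j0 g0"
    have b0R: "b0 \<in> R" unfolding b0_def using vR j0 by simp
    define J' where "J' = J - {j0}"
    have finJ': "finite J'" unfolding J'_def using finJ by simp
    have cJ': "card G < card J'" unfolding J'_def using cardJ insert.hyps j0(1) finJ by simp
    have "\<forall>j\<in>J'. \<exists>pq. fst pq \<in> R \<and> snd pq \<in> R \<and> fst pq \<noteq> 0 \<and> fst pq * v j g0 = snd pq * b0"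
    proof
      fix j assume "j \<in> J'"
      hence "v j g0 \<in> R" using vR unfolding J'_def by simp
      then obtain p q where "p \<in> R" "q \<in> R" "p \<noteq> 0" "p * v j g0 = q * b0"
        using ore b0R j0(2) unfolding b0_def by blast
      thus "\<exists>pq. fst pq \<in> R \<and> snd pq \<in> R \<and> fst pq \<noteq> 0 \<and> fst pq * v j g0 = snd pq * b0"
        by (intro exI[of _ "(p, q)"]) simp
    qed
    then obtain PQ where PQ: "\<forall>j\<in>J'. fst (PQ j) \<in> R \<and> snd (PQ j) \<in> R \<and> fst (PQ j) \<noteq> 0 \<and>
        fst (PQ j) * v j g0 = snd (PQ j) * b0" by (rule bchoice[elim_format]) blast
    define p where "p j = fst (PQ j)" for j
    define q where "q j = snd (PQ j)" for j
    have pR: "p j \<in> R" "q j \<in> R" "p j \<noteq> 0" "p j * v j g0 = q j * b0" if "j \<in> J'" for j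
      using PQ that unfolding p_def q_def by auto
    define w where "w j g = p j * v j g - q j * v j0 g" for j g
    have wR: "\<forall>j\<in>J'. \<forall>g\<in>G. w j g \<in> R"
      unfolding w_def using pR vR j0(1) unfolding J'_def by (auto intro!: Rdiff Rmult)
    obtain s where s: "\<forall>j\<in>J'. s j \<in> R" "\<exists>j\<in>J'. s j \<noteq> 0" "\<forall>g\<in>G. (\<Sum>j\<in>J'. s j * w j g) = 0"
      using insert.IH[OF finJ' cJ' wR] by blast
    define r where "r j = (if j = j0 then - (\<Sum>i\<in>J'. s i * q i) else s j * p j)" for j
    have rR: "\<forall>j\<in>J. r j \<in> R"
      unfolding r_def using s(1) pR finJ by (auto intro!: Rneg Rsum Rmult simp: J'_def)
    have rnz: "\<exists>j\<in>J. r j \<noteq> 0"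
    proof -
      obtain j where j: "j \<in> J'" "s j \<noteq> 0" using s(2) by blast
      have "j \<noteq> j0" "j \<in> J" using j(1) unfolding J'_def by auto
      moreover have "s j * p j \<noteq> 0" using Rdom[OF _ _ j(2)] s(1) pR j(1) by blast
      ultimately show ?thesis unfolding r_def by force
    qed
    have sumeq: "(\<Sum>j\<in>J. r j * v j g) = (\<Sum>j\<in>J'. s j * w j g)" for g
    proof -
      have "(\<Sum>j\<in>J. r j * v j g) = r j0 * v j0 g + (\<Sum>j\<in>J'. r j * v j g)"
        unfolding J'_def using finJ j0(1) by (rule sum.remove)
      also have "(\<Sum>j\<in>J'. r j * v j g) = (\<Sum>j\<in>J'. s j * p j * v j g)"
        unfolding r_def J'_def by (intro sum.cong) auto
      finally show ?thesis unfolding w_def r_def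
        by (simp add: right_diff_distrib sum_subtractf sum_distrib_right mult.assoc)
    qed
    have "\<forall>g\<in>insert g0 G. (\<Sum>j\<in>J. r j * v j g) = 0"
    proof
      fix g assume "g \<in> insert g0 G"
      thus "(\<Sum>j\<in>J. r j * v j g) = 0"
      proof
        assume g: "g = g0"
        have "(\<Sum>j\<in>J'. s j * w j g0) = 0"
          by (rule sum.neutral) (simp add: w_def pR(4) b0_def)
        thus ?thesis using sumeq g by simp
      next
        assume "g \<in> G" thus ?thesis using sumeq s(3) by simp
      qed
    qed
    thus ?thesis using rR rnz by blast
  qed
qed

end

context spbw begin

lemma dep_right:
  assumes ore: "\<forall>a\<in>R. \<forall>b\<in>R. b \<noteq> 0 \<longrightarrow> (\<exists>p\<in>R. \<exists>q\<in>R. p \<noteq> 0 \<and> a * p = b * q)"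
  shows "finite G \<Longrightarrow> finite J \<Longrightarrow> card G < card J \<Longrightarrow> (\<forall>j\<in>J. \<forall>g\<in>G. v j g \<in> R) \<Longrightarrow>
    \<exists>r. (\<forall>j\<in>J. r j \<in> R) \<and> (\<exists>j\<in>J. r j \<noteq> 0) \<and> (\<forall>g\<in>G. (\<Sum>j\<in>J. v j g * r j) = 0)"
proof (induction G arbitrary: J v rule: finite_induct)
  case empty
  then obtain j0 where j0: "j0 \<in> J" by fastforce
  define r where "r j = (if j = j0 then 1 else (0::'a))" for j
  have "\<forall>j\<in>J. r j \<in> R" unfolding r_def using R0 R1 by simp
  moreover have "r j0 \<noteq> 0" unfolding r_def using one_neq_zero by simp
  ultimately show ?case using j0 by blast
next
  case (insert g0 G)
  note finJ = insert.prems(1) and cardJ = insert.prems(2) and vR = insert.prems(3)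
  have cG: "card G < card J" using cardJ insert.hyps by simp
  show ?case
  proof (cases "\<forall>j\<in>J. v j g0 = 0")
    case True
    obtain r where r: "\<forall>j\<in>J. r j \<in> R" "\<exists>j\<in>J. r j \<noteq> 0" "\<forall>g\<in>G. (\<Sum>j\<in>J. v j g * r j) = 0"
      using insert.IH[OF finJ cG] vR by blast
    have "(\<Sum>j\<in>J. v j g0 * r j) = 0" using True by simp
    thus ?thesis using r by blast
  next
    case False
    then obtain j0 where j0: "j0 \<in> J" "v j0 g0 \<noteq> 0" by blast
    define b0 where "b0 = v j0 g0"
    have b0R: "b0 \<in> R" unfolding b0_def using vR j0 by simp
    define J' where "J' = J - {j0}"
    have finJ': "finite J'" unfolding J'_def using finJ by simp
    have cJ': "card G < card J'" unfolding J'_def using cardJ insert.hyps j0(1) finJ by simp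
    have "\<forall>j\<in>J'. \<exists>pq. fst pq \<in> R \<and> snd pq \<in> R \<and> fst pq \<noteq> 0 \<and> v j g0 * fst pq = b0 * snd pq"
    proof
      fix j assume "j \<in> J'"
      hence "v j g0 \<in> R" using vR unfolding J'_def by simp
      then obtain p q where "p \<in> R" "q \<in> R" "p \<noteq> 0" "v j g0 * p = b0 * q"
        using ore b0R j0(2) unfolding b0_def by blast
      thus "\<exists>pq. fst pq \<in> R \<and> snd pq \<in> R \<and> fst pq \<noteq> 0 \<and> v j g0 * fst pq = b0 * snd pq"
        by (intro exI[of _ "(p, q)"]) simp
    qed
    then obtain PQ where PQ: "\<forall>j\<in>J'. fst (PQ j) \<in> R \<and> snd (PQ j) \<in> R \<and> fst (PQ j) \<noteq> 0 \<and>
        v j g0 * fst (PQ j) = b0 * snd (PQ j)" by (rule bchoice[elim_format]) blast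
    define p where "p j = fst (PQ j)" for j
    define q where "q j = snd (PQ j)" for j
    have pR: "p j \<in> R" "q j \<in> R" "p j \<noteq> 0" "v j g0 * p j = b0 * q j" if "j \<in> J'" for j
      using PQ that unfolding p_def q_def by auto
    define w where "w j g = v j g * p j - v j0 g * q j" for j g
    have wR: "\<forall>j\<in>J'. \<forall>g\<in>G. w j g \<in> R"
      unfolding w_def using pR vR j0(1) unfolding J'_def by (auto intro!: Rdiff Rmult)
    obtain s where s: "\<forall>j\<in>J'. s j \<in> R" "\<exists>j\<in>J'. s j \<noteq> 0" "\<forall>g\<in>G. (\<Sum>j\<in>J'. w j g * s j) = 0"
      using insert.IH[OF finJ' cJ' wR] by blast
    define r where "r j = (if j = j0 then - (\<Sum>i\<in>J'. q i * s i) else p j * s j)" for j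
    have rR: "\<forall>j\<in>J. r j \<in> R"
      unfolding r_def using s(1) pR finJ by (auto intro!: Rneg Rsum Rmult simp: J'_def)
    have rnz: "\<exists>j\<in>J. r j \<noteq> 0"
    proof -
      obtain j where j: "j \<in> J'" "s j \<noteq> 0" using s(2) by blast
      have "j \<noteq> j0" "j \<in> J" using j(1) unfolding J'_def by auto
      moreover have "p j * s j \<noteq> 0" using Rdom[OF _ _ _ j(2)] s(1) pR j(1) by blast
      ultimately show ?thesis unfolding r_def by force
    qed
    have sumeq: "(\<Sum>j\<in>J. v j g * r j) = (\<Sum>j\<in>J'. w j g * s j)" for g
    proof -
      have "(\<Sum>j\<in>J. v j g * r j) = v j0 g * r j0 + (\<Sum>j\<in>J'. v j g * r j)"
        unfolding J'_def using finJ j0(1) by (rule sum.remove)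
      also have "(\<Sum>j\<in>J'. v j g * r j) = (\<Sum>j\<in>J'. v j g * (p j * s j))"
        unfolding r_def J'_def by (intro sum.cong) auto
      finally show ?thesis unfolding w_def r_def
        by (simp add: left_diff_distrib sum_subtractf sum_distrib_left mult.assoc)
    qed
    have "\<forall>g\<in>insert g0 G. (\<Sum>j\<in>J. v j g * r j) = 0"
    proof
      fix g assume "g \<in> insert g0 G"
      thus "(\<Sum>j\<in>J. v j g * r j) = 0"
      proof
        assume g: "g = g0"
        have "(\<Sum>j\<in>J'. w j g0 * s j) = 0"
          by (rule sum.neutral) (simp add: w_def pR(4) b0_def)
        thus ?thesis using sumeq g by simp
      next
        assume "g \<in> G" thus ?thesis using sumeq s(3) by simp
      qed
    qed
    thus ?thesis using rR rnz by blast
  qed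
qed

lemma B0_empty: "B 0 = {}" unfolding B_def by simp

lemma rspan: "z \<in> Lt K \<Longrightarrow> \<exists>t. (\<forall>g\<in>B K. t g \<in> R) \<and> z = (\<Sum>g\<in>B K. mon g * t g)"
proof (induction K arbitrary: z)
  case 0
  hence "z = 0" by (rule Lt0_zero)
  thus ?case by (simp add: B0_empty)
next
  case (Suc K)
  obtain f where f: "\<And>\<gamma>. \<gamma> \<in> T K \<Longrightarrow> f \<gamma> \<in> R" "z - (\<Sum>\<gamma>\<in>T K. f \<gamma> * mon \<gamma>) \<in> Lt K"
    using top_decomp[OF Suc.prems] by metis
  have TE: "\<gamma> \<in> exps n" "deg \<gamma> = K" if "\<gamma> \<in> T K" for \<gamma> using that unfolding T_def by auto
  define s where "s \<gamma> = inv_into R (tf \<gamma>) (f \<gamma>)" for \<gamma>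
  have sR: "s \<gamma> \<in> R" "tf \<gamma> (s \<gamma>) = f \<gamma>" if g: "\<gamma> \<in> T K" for \<gamma>
  proof -
    have bij: "bij_betw (tf \<gamma>) R R" using tf[OF TE(1)[OF g]] by blast
    have "f \<gamma> \<in> tf \<gamma> ` R" using bij f(1)[OF g] by (simp add: bij_betw_def)
    thus "s \<gamma> \<in> R" unfolding s_def by (rule inv_into_into)
    show "tf \<gamma> (s \<gamma>) = f \<gamma>" unfolding s_def by (rule bij_betw_inv_into_right[OF bij f(1)[OF g]])
  qed
  define m where "m \<gamma> = mon \<gamma> * s \<gamma> - f \<gamma> * mon \<gamma>" for \<gamma>
  have mL: "m \<gamma> \<in> Lt K" if g: "\<gamma> \<in> T K" for \<gamma>
    using tf[OF TE(1)[OF g]] sR[OF g] TE(2)[OF g] unfolding m_def by auto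
  define z' where "z' = z - (\<Sum>\<gamma>\<in>T K. mon \<gamma> * s \<gamma>)"
  have "z' = (z - (\<Sum>\<gamma>\<in>T K. f \<gamma> * mon \<gamma>)) - (\<Sum>\<gamma>\<in>T K. m \<gamma>)"
    unfolding z'_def m_def by (simp add: sum_subtractf)
  hence z': "z' \<in> Lt K" using f(2) mL finT by (auto intro!: Lt_diff Lt_sum)
  obtain t' where t': "\<forall>g\<in>B K. t' g \<in> R" "z' = (\<Sum>g\<in>B K. mon g * t' g)"
    using Suc.IH[OF z'] by blast
  define t where "t g = (if g \<in> B K then t' g else s g)" for g
  have "(\<Sum>g\<in>B (Suc K). mon g * t g) = (\<Sum>g\<in>B K. mon g * t g) + (\<Sum>g\<in>T K. mon g * t g)"
    unfolding B_Suc(1) by (rule sum.union_disjoint[OF finB finT B_Suc(2)])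
  also have "(\<Sum>g\<in>B K. mon g * t g) = z'" unfolding t'(2) t_def by simp
  also have "(\<Sum>g\<in>T K. mon g * t g) = (\<Sum>g\<in>T K. mon g * s g)"
    unfolding t_def using B_Suc(2) by (intro sum.cong) auto
  finally have "z = (\<Sum>g\<in>B (Suc K). mon g * t g)" unfolding z'_def by simp
  moreover have "\<forall>g\<in>B (Suc K). t g \<in> R" unfolding t_def B_Suc(1) using t'(1) sR by auto
  ultimately show ?case by blast
qed

lemma rindep: "(\<forall>g\<in>B K. t g \<in> R) \<Longrightarrow> (\<Sum>g\<in>B K. mon g * t g) = 0 \<Longrightarrow> \<forall>g\<in>B K. t g = 0"
proof (induction K)
  case 0 thus ?case by (simp add: B0_empty)
next
  case (Suc K)
  have TE: "\<gamma> \<in> exps n" "deg \<gamma> = K" if "\<gamma> \<in> T K" for \<gamma> using that unfolding T_def by auto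
  have tR: "t g \<in> R" if "g \<in> B K \<or> g \<in> T K" for g using Suc.prems(1) that B_Suc(1) by auto
  define S1 where "S1 = (\<Sum>g\<in>B K. mon g * t g)"
  define S2 where "S2 = (\<Sum>g\<in>T K. mon g * t g)"
  have S12: "S1 + S2 = 0" using Suc.prems(2) unfolding S1_def S2_def B_Suc(1)
    by (simp add: sum.union_disjoint[OF finB finT B_Suc(2)])
  have S1L: "S1 \<in> Lt K" unfolding S1_def
  proof (rule Lt_sum[OF finB])
    fix g assume g: "g \<in> B K"
    have gE: "g \<in> exps n" "deg g < K" using g unfolding B_def by auto
    have "mon g \<in> Lt (Suc (deg g))" by (rule mon_Lt1[OF gE(1)]) simp
    moreover have "t g \<in> Lt 1" using mon_Lt[OF zero_exps _ tR[of g]] g by (simp add: mon_zero deg_zero)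
    ultimately have "mon g * t g \<in> Lt (Suc (deg g) + 1 - 1)" by (rule Lt_mult)
    thus "mon g * t g \<in> Lt K" by (rule Lt_mono[rotated]) (use gE in simp)
  qed
  define m where "m \<gamma> = mon \<gamma> * t \<gamma> - tf \<gamma> (t \<gamma>) * mon \<gamma>" for \<gamma>
  have mL: "m \<gamma> \<in> Lt K" if g: "\<gamma> \<in> T K" for \<gamma>
    using tf[OF TE(1)[OF g]] tR[of \<gamma>] g TE(2)[OF g] unfolding m_def by auto
  have "(\<Sum>\<gamma>\<in>T K. tf \<gamma> (t \<gamma>) * mon \<gamma>) = S2 - (\<Sum>\<gamma>\<in>T K. m \<gamma>)"
    unfolding S2_def m_def by (simp add: sum_subtractf)
  also have "\<dots> = - S1 - (\<Sum>\<gamma>\<in>T K. m \<gamma>)" using S12 by (simp add: eq_neg_iff_add_eq_0 add.commute)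
  finally have "(\<Sum>\<gamma>\<in>T K. tf \<gamma> (t \<gamma>) * mon \<gamma>) \<in> Lt K"
    using S1L mL finT by (auto intro!: Lt_diff Lt_neg Lt_sum)
  hence z: "tf \<gamma> (t \<gamma>) = 0" if "\<gamma> \<in> T K" for \<gamma>
    using top_zero[of K "\<lambda>\<gamma>. tf \<gamma> (t \<gamma>)" \<gamma>] tf_R[OF TE(1) tR] that by auto
  have tz: "t \<gamma> = 0" if g: "\<gamma> \<in> T K" for \<gamma>
    using tf_nz[OF TE(1)[OF g] tR[of \<gamma>]] z[OF g] g by auto
  hence "S2 = 0" unfolding S2_def by simp
  hence "S1 = 0" using S12 by simp
  hence "\<forall>g\<in>B K. t g = 0" using Suc.IH tR unfolding S1_def by auto
  thus ?case using tz B_Suc(1) by auto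
qed

end

context spbw begin

lemma card_B_bound: "card (B (Suc D)) \<le> (D + 1) ^ n"
proof -
  have le: "\<gamma> i < Suc D" if "\<gamma> \<in> B (Suc D)" "i < n" for \<gamma> i
  proof -
    have "\<gamma> i \<le> deg \<gamma>" unfolding deg_def using that(2) by (intro member_le_sum) auto
    thus ?thesis using that(1) unfolding B_def by auto
  qed
  have "inj_on (w (Suc D)) (B (Suc D))"
  proof (rule inj_onI)
    fix \<alpha> \<beta> assume a: "\<alpha> \<in> B (Suc D)" and b: "\<beta> \<in> B (Suc D)" and e: "w (Suc D) \<alpha> = w (Suc D) \<beta>"
    have "\<forall>i<n. \<alpha> i = \<beta> i"
    proof (rule digits_inj[of n \<alpha> "Suc D" \<beta>])
      show "\<forall>i<n. \<alpha> i < Suc D" using le[OF a] by blast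
      show "\<forall>i<n. \<beta> i < Suc D" using le[OF b] by blast
      show "(\<Sum>i<n. \<alpha> i * Suc D ^ i) = (\<Sum>i<n. \<beta> i * Suc D ^ i)" using e unfolding w_def .
    qed
    moreover have "\<forall>i. i \<ge> n \<longrightarrow> \<alpha> i = 0 \<and> \<beta> i = 0" using a b unfolding B_def exps_def by auto
    ultimately show "\<alpha> = \<beta>"
    proof (intro ext)
      fix i assume "\<forall>i<n. \<alpha> i = \<beta> i" "\<forall>i. i \<ge> n \<longrightarrow> \<alpha> i = 0 \<and> \<beta> i = 0"
      thus "\<alpha> i = \<beta> i" by (cases "i < n") auto
    qed
  qed
  moreover have "w (Suc D) ` B (Suc D) \<subseteq> {..<(Suc D) ^ n}"
  proof
    fix k assume "k \<in> w (Suc D) ` B (Suc D)"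
    then obtain \<gamma> where g: "\<gamma> \<in> B (Suc D)" "k = w (Suc D) \<gamma>" by blast
    have "w (Suc D) \<gamma> < Suc D ^ n" unfolding w_def using le[OF g(1)] by (intro digits_bound) blast
    thus "k \<in> {..<(Suc D) ^ n}" using g(2) by simp
  qed
  ultimately have "card (B (Suc D)) \<le> card {..<(Suc D) ^ n}"
    by (intro card_inj_on_le) auto
  thus ?thesis by simp
qed

lemma card_B_pos: "1 \<le> card (B (Suc D))"
proof -
  have "(\<lambda>_. 0) \<in> B (Suc D)" unfolding B_def using zero_exps deg_zero by simp
  hence "B (Suc D) \<noteq> {}" by blast
  thus ?thesis using finB[of "Suc D"] by (simp add: Suc_le_eq card_gt_0_iff)
qed

lemma choose_D: "\<exists>D. card (B (D + c)) < 2 * card (B (Suc D))"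
proof -
  obtain D where D: "card (B (Suc (D + c))) < 2 * card (B (Suc D))"
    using doubling[of "\<lambda>D. card (B (Suc D))" n c] card_B_bound card_B_pos by auto
  have "card (B (D + c)) \<le> card (B (Suc (D + c)))" using finB B_mono by (intro card_mono) auto
  thus ?thesis using D by (intro exI[of _ D]) linarith
qed

lemma J_card: "card (X \<times> (UNIV :: bool set)) = 2 * card X"
  by (simp add: card_cartesian_product mult.commute)

lemma A_left_ore:
  fixes a b :: 'a
  assumes ore: "\<forall>a\<in>R. \<forall>b\<in>R. b \<noteq> 0 \<longrightarrow> (\<exists>p\<in>R. \<exists>q\<in>R. p \<noteq> 0 \<and> p * a = q * b)"
    and b0: "b \<noteq> 0"
  shows "\<exists>p q. p \<noteq> 0 \<and> p * a = q * b"
proof -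
  obtain ka kb where ka: "a \<in> Lt ka" and kb: "b \<in> Lt kb" using in_some_Lt by blast
  define k0 where "k0 = ka + kb"
  have a: "a \<in> Lt k0" unfolding k0_def using ka by (rule Lt_mono[rotated]) simp
  have b: "b \<in> Lt k0" unfolding k0_def using kb by (rule Lt_mono[rotated]) simp
  obtain D where D: "card (B (D + k0)) < 2 * card (B (Suc D))" using choose_D by blast
  define BB where "BB = B (Suc D)"
  define G where "G = B (D + k0)"
  define J where "J = BB \<times> (UNIV :: bool set)"
  have finJ: "finite J" unfolding J_def BB_def using finB by simp
  have cardJ: "card G < card J" unfolding J_def G_def BB_def J_card using D by simp
  define vv where "vv j = mon (fst j) * (if snd j then b else a)" for j
  have vvL: "vv j \<in> Lt (D + k0)" if "j \<in> J" for j
  proof -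
    have fE: "fst j \<in> exps n" "deg (fst j) < Suc D" using that unfolding J_def BB_def B_def by auto
    have "mon (fst j) \<in> Lt (Suc D)" by (rule mon_Lt1[OF fE])
    moreover have "(if snd j then b else a) \<in> Lt k0" using a b by simp
    ultimately have "vv j \<in> Lt (Suc D + k0 - 1)" unfolding vv_def by (rule Lt_mult)
    thus ?thesis by simp
  qed
  define cv where "cv j = (SOME c. (\<forall>g\<in>G. c g \<in> R) \<and> vv j = (\<Sum>g\<in>G. c g * mon g))" for j
  have cv: "(\<forall>g\<in>G. cv j g \<in> R) \<and> vv j = (\<Sum>g\<in>G. cv j g * mon g)" if "j \<in> J" for j
  proof -
    have "\<exists>c. (\<forall>g\<in>G. c g \<in> R) \<and> vv j = (\<Sum>g\<in>G. c g * mon g)"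
      using vvL[OF that] unfolding G_def Lt_def by blast
    thus ?thesis unfolding cv_def by (rule someI_ex)
  qed
  have "\<exists>r. (\<forall>j\<in>J. r j \<in> R) \<and> (\<exists>j\<in>J. r j \<noteq> 0) \<and> (\<forall>g\<in>G. (\<Sum>j\<in>J. r j * cv j g) = 0)"
  proof -
    have cvR: "\<forall>j\<in>J. \<forall>g\<in>G. cv j g \<in> R" using cv by blast
    have finG: "finite G" unfolding G_def by (rule finB)
    show "\<exists>r. (\<forall>j\<in>J. r j \<in> R) \<and> (\<exists>j\<in>J. r j \<noteq> 0) \<and> (\<forall>g\<in>G. (\<Sum>j\<in>J. r j * cv j g) = 0)"
      by (rule dep_left[OF ore finG finJ cardJ cvR])
  qed
  then obtain r where r: "\<forall>j\<in>J. r j \<in> R" "\<exists>j\<in>J. r j \<noteq> 0" "\<forall>g\<in>G. (\<Sum>j\<in>J. r j * cv j g) = 0"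
    by blast
  have "(\<Sum>j\<in>J. r j * vv j) = (\<Sum>j\<in>J. \<Sum>g\<in>G. r j * (cv j g * mon g))"
    using cv by (intro sum.cong refl) (simp add: sum_distrib_left)
  also have "\<dots> = (\<Sum>g\<in>G. (\<Sum>j\<in>J. r j * cv j g) * mon g)"
    by (subst sum.swap) (simp add: sum_distrib_right mult.assoc)
  also have "\<dots> = 0" using r(3) by simp
  finally have S0: "(\<Sum>j\<in>J. r j * vv j) = 0" .
  define p where "p = (\<Sum>\<gamma>\<in>BB. r (\<gamma>, False) * mon \<gamma>)"
  define q where "q = (\<Sum>\<gamma>\<in>BB. r (\<gamma>, True) * mon \<gamma>)"
  have "(\<Sum>j\<in>J. r j * vv j) = (\<Sum>\<gamma>\<in>BB. \<Sum>f\<in>UNIV. r (\<gamma>, f) * vv (\<gamma>, f))"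
    unfolding J_def by (simp add: sum.cartesian_product)
  also have "\<dots> = (\<Sum>\<gamma>\<in>BB. r (\<gamma>, False) * mon \<gamma> * a + r (\<gamma>, True) * mon \<gamma> * b)"
    unfolding vv_def by (simp add: UNIV_bool mult.assoc add.commute)
  also have "\<dots> = p * a + q * b" unfolding p_def q_def by (simp add: sum.distrib sum_distrib_right)
  finally have pq: "p * a + q * b = 0" using S0 by simp
  have BBE: "finite BB" "BB \<subseteq> exps n" unfolding BB_def B_def using finB[of "Suc D"] unfolding B_def by auto
  have rR: "r (\<gamma>, f) \<in> R" if "\<gamma> \<in> BB" for \<gamma> f using r(1) that unfolding J_def by simp
  have "p \<noteq> 0"
  proof
    assume p0: "p = 0"
    have rF: "r (\<gamma>, False) = 0" if "\<gamma> \<in> BB" for \<gamma>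
      using indep[OF BBE, of "\<lambda>\<gamma>. r (\<gamma>, False)" \<gamma>] rR p0 that unfolding p_def by blast
    have "q * b = 0" using pq p0 by simp
    hence "q = 0" using domainA b0 by blast
    hence rT: "r (\<gamma>, True) = 0" if "\<gamma> \<in> BB" for \<gamma>
      using indep[OF BBE, of "\<lambda>\<gamma>. r (\<gamma>, True)" \<gamma>] rR that unfolding q_def by blast
    obtain j where j: "j \<in> J" "r j \<noteq> 0" using r(2) by blast
    obtain \<gamma> f where jj: "j = (\<gamma>, f)" by (cases j)
    have "\<gamma> \<in> BB" using j(1) unfolding jj J_def by simp
    thus False using rF rT j(2) unfolding jj by (cases f) auto
  qed
  moreover have "p * a = (- q) * b" using pq by (simp add: eq_neg_iff_add_eq_0)
  ultimately show ?thesis by blast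
qed

lemma A_right_ore:
  fixes a b :: 'a
  assumes ore: "\<forall>a\<in>R. \<forall>b\<in>R. b \<noteq> 0 \<longrightarrow> (\<exists>p\<in>R. \<exists>q\<in>R. p \<noteq> 0 \<and> a * p = b * q)"
    and b0: "b \<noteq> 0"
  shows "\<exists>p q. p \<noteq> 0 \<and> a * p = b * q"
proof -
  obtain ka kb where ka: "a \<in> Lt ka" and kb: "b \<in> Lt kb" using in_some_Lt by blast
  define k0 where "k0 = ka + kb"
  have a: "a \<in> Lt k0" unfolding k0_def using ka by (rule Lt_mono[rotated]) simp
  have b: "b \<in> Lt k0" unfolding k0_def using kb by (rule Lt_mono[rotated]) simp
  obtain D where D: "card (B (D + k0)) < 2 * card (B (Suc D))" using choose_D by blast
  define BB where "BB = B (Suc D)"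
  define G where "G = B (D + k0)"
  define J where "J = BB \<times> (UNIV :: bool set)"
  have finJ: "finite J" unfolding J_def BB_def using finB by simp
  have cardJ: "card G < card J" unfolding J_def G_def BB_def J_card using D by simp
  define vv where "vv j = (if snd j then b else a) * mon (fst j)" for j
  have vvL: "vv j \<in> Lt (D + k0)" if "j \<in> J" for j
  proof -
    have fE: "fst j \<in> exps n" "deg (fst j) < Suc D" using that unfolding J_def BB_def B_def by auto
    have "mon (fst j) \<in> Lt (Suc D)" by (rule mon_Lt1[OF fE])
    moreover have "(if snd j then b else a) \<in> Lt k0" using a b by simp
    ultimately have "vv j \<in> Lt (k0 + Suc D - 1)" unfolding vv_def by (intro Lt_mult)
    thus ?thesis by (simp add: add.commute)
  qed
  define cv where "cv j = (SOME t. (\<forall>g\<in>G. t g \<in> R) \<and> vv j = (\<Sum>g\<in>G. mon g * t g))" for j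
  have cv: "(\<forall>g\<in>G. cv j g \<in> R) \<and> vv j = (\<Sum>g\<in>G. mon g * cv j g)" if "j \<in> J" for j
  proof -
    have "\<exists>t. (\<forall>g\<in>G. t g \<in> R) \<and> vv j = (\<Sum>g\<in>G. mon g * t g)"
      using rspan[OF vvL[OF that]] unfolding G_def by blast
    thus ?thesis unfolding cv_def by (rule someI_ex)
  qed
  have "\<exists>r. (\<forall>j\<in>J. r j \<in> R) \<and> (\<exists>j\<in>J. r j \<noteq> 0) \<and> (\<forall>g\<in>G. (\<Sum>j\<in>J. cv j g * r j) = 0)"
  proof -
    have cvR: "\<forall>j\<in>J. \<forall>g\<in>G. cv j g \<in> R" using cv by blast
    have finG: "finite G" unfolding G_def by (rule finB)
    show "\<exists>r. (\<forall>j\<in>J. r j \<in> R) \<and> (\<exists>j\<in>J. r j \<noteq> 0) \<and> (\<forall>g\<in>G. (\<Sum>j\<in>J. cv j g * r j) = 0)"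
      by (rule dep_right[OF ore finG finJ cardJ cvR])
  qed
  then obtain r where r: "\<forall>j\<in>J. r j \<in> R" "\<exists>j\<in>J. r j \<noteq> 0" "\<forall>g\<in>G. (\<Sum>j\<in>J. cv j g * r j) = 0"
    by blast
  have "(\<Sum>j\<in>J. vv j * r j) = (\<Sum>j\<in>J. \<Sum>g\<in>G. mon g * cv j g * r j)"
    using cv by (intro sum.cong refl) (simp add: sum_distrib_right)
  also have "\<dots> = (\<Sum>g\<in>G. mon g * (\<Sum>j\<in>J. cv j g * r j))"
    by (subst sum.swap) (simp add: sum_distrib_left mult.assoc)
  also have "\<dots> = 0" using r(3) by simp
  finally have S0: "(\<Sum>j\<in>J. vv j * r j) = 0" .
  define p where "p = (\<Sum>\<gamma>\<in>BB. mon \<gamma> * r (\<gamma>, False))"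
  define q where "q = (\<Sum>\<gamma>\<in>BB. mon \<gamma> * r (\<gamma>, True))"
  have "(\<Sum>j\<in>J. vv j * r j) = (\<Sum>\<gamma>\<in>BB. \<Sum>f\<in>UNIV. vv (\<gamma>, f) * r (\<gamma>, f))"
    unfolding J_def by (simp add: sum.cartesian_product)
  also have "\<dots> = (\<Sum>\<gamma>\<in>BB. a * (mon \<gamma> * r (\<gamma>, False)) + b * (mon \<gamma> * r (\<gamma>, True)))"
    unfolding vv_def by (simp add: UNIV_bool mult.assoc add.commute)
  also have "\<dots> = a * p + b * q" unfolding p_def q_def by (simp add: sum.distrib sum_distrib_left)
  finally have pq: "a * p + b * q = 0" using S0 by simp
  have rR: "r (\<gamma>, f) \<in> R" if "\<gamma> \<in> BB" for \<gamma> f using r(1) that unfolding J_def by simp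
  have "p \<noteq> 0"
  proof
    assume p0: "p = 0"
    have rF: "\<forall>\<gamma>\<in>BB. r (\<gamma>, False) = 0"
      using rindep[of "Suc D" "\<lambda>\<gamma>. r (\<gamma>, False)"] rR p0 unfolding p_def BB_def by blast
    have "b * q = 0" using pq p0 by simp
    hence "q = 0" using domainA b0 by blast
    hence rT: "\<forall>\<gamma>\<in>BB. r (\<gamma>, True) = 0"
      using rindep[of "Suc D" "\<lambda>\<gamma>. r (\<gamma>, True)"] rR unfolding q_def BB_def by blast
    obtain j where j: "j \<in> J" "r j \<noteq> 0" using r(2) by blast
    obtain \<gamma> f where jj: "j = (\<gamma>, f)" by (cases j)
    have "\<gamma> \<in> BB" using j(1) unfolding jj J_def by simp
    thus False using rF rT j(2) unfolding jj by (cases f) auto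
  qed
  moreover have "a * p = b * (- q)" using pq by (simp add: eq_neg_iff_add_eq_0)
  ultimately show ?thesis by blast
qed

end

theorem proposition3p1:
  fixes R :: "'a::ring_1 set" and x :: "nat \<Rightarrow> 'a" and n :: nat
  assumes "bijective_skew_PBW R x n" and "domain_on R"
  shows "(left_noetherian_on R \<longrightarrow> left_ore_domain_on (UNIV :: 'a set)) \<and>
         (right_noetherian_on R \<longrightarrow> right_ore_domain_on (UNIV :: 'a set))"
proof -
  interpret spbw R x n by (rule spbw.intro) (rule assms)+
  have dom: "domain_on (UNIV :: 'a set)"
    unfolding domain_on_def using one_neq_zero domainA by blast
  show ?thesis
  proof (intro conjI impI)
    assume noeth: "left_noetherian_on R"
    have ore: "\<forall>a\<in>R. \<forall>b\<in>R. b \<noteq> 0 \<longrightarrow> (\<exists>p\<in>R. \<exists>q\<in>R. p \<noteq> 0 \<and> p * a = q * b)"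
      using R_left_ore[OF noeth] by blast
    show "left_ore_domain_on (UNIV :: 'a set)"
      unfolding left_ore_domain_on_def using dom A_left_ore[OF ore] by blast
  next
    assume noeth: "right_noetherian_on R"
    have ore: "\<forall>a\<in>R. \<forall>b\<in>R. b \<noteq> 0 \<longrightarrow> (\<exists>p\<in>R. \<exists>q\<in>R. p \<noteq> 0 \<and> a * p = b * q)"
      using R_right_ore[OF noeth] by blast
    show "right_ore_domain_on (UNIV :: 'a set)"
      unfolding right_ore_domain_on_def using dom A_right_ore[OF ore] by blast
  qed
qed

end
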